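(* Under the hypotheses of the preceding statement, assume furthermore that $L_\lambda$ is self-adjoint, with normalized eigenvectors $e_1,e_2,\dots$ (a Hilbert basis of $\mathcal H$), so that $\mathcal H^{\mathfrak c}=\mathrm{span}\{e_1,\dots,e_m\}$. Then for $\lambda\in\Lambda_{2k}$, $$h^{\rm app}_\lambda(\xi,\omega)=\sum_{n=m+1}^\infty h^{{\rm app},n}_\lambda(\xi,\omega)e_n,\qquad h^{{\rm app},n}_\lambda(\xi,\omega)=e^{(k-1)z_\sigma(\omega)}\sum_{(i_1,\dots,i_k)\in\mathcal I^k}\xi_{i_1}\cdots\xi_{i_k}\langle F_k(e_{i_1},\dots,e_{i_k}),e_n\rangle M_n^{i_1\cdots i_k}(\omega,\lambda),$$ where $\mathcal I=\{1,\dots,m\}$, $\xi_i=\langle\xi,e_i\rangle$, and $$M_n^{i_1\cdots i_k}(\omega,\lambda)=\int_{-\infty}^0 e^{(\sum_{j=1}^k\beta_{i_j}(\lambda)-\beta_n(\lambda))s+\sigma(k-1)W_s(\omega)}ds;$$ in particular $h^{\rm app}_\lambda$ is a random homogeneous polynomial of order $k$ in $\xi$ and, together with the approximation estimate of the preceding statement, constitutes the leading-order Taylor approximation of $h_\lambda$. Likewise $$\widehat h^{\rm app}_\lambda(\xi,\omega)=\sum_{n\ge m+1}\Big(\sum_{(i_1,\dots,i_k)\in\mathcal I^k}\xi_{i_1}\cdots\xi_{i_k}\langle F_k(e_{i_1},\dots,e_{i_k}),e_n\rangle M_n^{i_1\cdots i_k}(\omega,\lambda)\Big)e_n$$ is a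 random homogeneous polynomial of order $k$ and constitutes the leading-order Taylor approximation of $\widehat h_\lambda$.
   Context: Everything as in the preceding statement: $\mathcal H$, $L_\lambda$ with eigenvalues $\beta_n(\lambda)$, $\alpha$, Wiener space, $W_t$, $\sigma>0$, $z_\sigma(\omega)=-\sigma\int_{-\infty}^0e^\tau W_\tau d\tau$; $F=F_k+O(\|u\|_\alpha^{k+1})$ $C^p$ with $p>k\ge2$ and $F_k$ continuous $k$-linear; principle of exchange of stabilities at $\lambda_c$ with $m$ critical eigenvalues; $\Lambda_{2k}\ni\lambda_c$ open with $0>2k\eta_{\mathfrak c}(2k)>\eta_{\mathfrak s}(2k)$; $h^{\rm app}_\lambda(\xi,\omega)=e^{(k-1)z_\sigma(\omega)}\int_{-\infty}^0e^{\sigma(k-1)W_s(\omega)}e^{-sL_\lambda}P_{\mathfrak s}F_k(e^{sL_\lambda}\xi)ds$, $\widehat h^{\rm app}_\lambda(\xi,\omega)=\int_{-\infty}^0e^{\sigma(k-1)W_s(\omega)}e^{-sL_\lambda}P_{\mathfrak s}F_k(e^{sL_\lambda}\xi)ds$; $h_\lambda$, $\widehat h_\lambda$ the local random (resp. stochastic) critical manifold functions, approximated to order $o(\|\xi\|_\alpha^k)$ by $h^{\rm app}_\lambda$, $\widehat h^{\rm app}_\lambda$ on random balls. A random homogeneous polynomial of order $p$ in $\xi\in\mathcal H^{\mathfrak c}$ with range in $\mathcal H^{\mathfrak s}_\alpha$ is $g(\xi,\omega)=\sum_{n\ge m+1}g_n(\xi,\omega)e_n$ with $g_n(\xi,\cdot)$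 measurable for each $\xi$ and $g_n(\cdot,\omega)$ a homogeneous polynomial of order $p$ in $\xi_1,\dots,\xi_m$ for each $\omega$. A leading-order Taylor approximation of order $k$ is such a random homogeneous polynomial of order $k$ satisfying the $o(\|\xi\|_\alpha^k)$ error estimate. *)

theory Defs
  imports "HOL-Analysis.Analysis" "HOL-Probability.Probability"
begin

text \<open>Modes are indexed from 0: the eigenvectors are
  e 0, e 1, ...; the critical modes are e 0, ..., e (m-1) (the paper's e_1..e_m),
  the stable modes are e n with n \<ge> m (the paper's n \<ge> m+1).\<close>

definition hilbert_basis :: "(nat \<Rightarrow> 'a::real_inner) \<Rightarrow> bool" where
  "hilbert_basis e \<longleftrightarrow>
     (\<forall>i j. inner (e i) (e j) = (if i = j then 1 else 0)) \<and>
     (\<forall>u. (\<lambda>n. inner u (e n) *\<^sub>R e n) sums u)"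

definition Hc :: "(nat \<Rightarrow> 'a::real_inner) \<Rightarrow> nat \<Rightarrow> 'a set" where
  "Hc e m = span (e ` {..<m})"

definition Ps :: "(nat \<Rightarrow> 'a::real_inner) \<Rightarrow> nat \<Rightarrow> 'a \<Rightarrow> 'a" where
  "Ps e m u = (\<Sum>n. if m \<le> n then inner u (e n) *\<^sub>R e n else 0)"

text \<open>The semigroup e^{tL} of the self-adjoint operator L with eigenpairs (beta n, e n),
  given by the spectral calculus.\<close>
definition sg :: "(nat \<Rightarrow> real) \<Rightarrow> (nat \<Rightarrow> 'a::real_inner) \<Rightarrow> real \<Rightarrow> 'a \<Rightarrow> 'a" where
  "sg \<beta> e t u = (\<Sum>n. (exp (\<beta> n * t) * inner u (e n)) *\<^sub>R e n)"

text \<open>Fractional power space H_alpha = D((c - L)^alpha) (c > sup of the spectrum) and its norm.\<close>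
definition in_Halpha :: "real \<Rightarrow> real \<Rightarrow> (nat \<Rightarrow> real) \<Rightarrow> (nat \<Rightarrow> 'a::real_inner) \<Rightarrow> 'a \<Rightarrow> bool" where
  "in_Halpha c \<alpha> \<beta> e u \<longleftrightarrow> summable (\<lambda>n. (c - \<beta> n) powr (2 * \<alpha>) * (inner u (e n))\<^sup>2)"

definition norm_alpha :: "real \<Rightarrow> real \<Rightarrow> (nat \<Rightarrow> real) \<Rightarrow> (nat \<Rightarrow> 'a::real_inner) \<Rightarrow> 'a \<Rightarrow> real" where
  "norm_alpha c \<alpha> \<beta> e u = sqrt (\<Sum>n. (c - \<beta> n) powr (2 * \<alpha>) * (inner u (e n))\<^sup>2)"

text \<open>Continuous k-linear map F_k : H_alpha^k \<rightarrow> H. A k-tuple is a function on {..<k}.\<close>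
definition cont_klinear ::
  "real \<Rightarrow> real \<Rightarrow> (nat \<Rightarrow> real) \<Rightarrow> (nat \<Rightarrow> 'a::real_inner) \<Rightarrow> nat \<Rightarrow> ((nat \<Rightarrow> 'a) \<Rightarrow> 'a) \<Rightarrow> bool" where
  "cont_klinear c \<alpha> \<beta> e k F \<longleftrightarrow>
     (\<forall>u v. (\<forall>j<k. u j = v j) \<longrightarrow> F u = F v) \<and>
     (\<forall>u j x y a b. (\<forall>i<k. in_Halpha c \<alpha> \<beta> e (u i)) \<and> j < k \<and>
        in_Halpha c \<alpha> \<beta> e x \<and> in_Halpha c \<alpha> \<beta> e y \<longrightarrow>
        F (u(j := a *\<^sub>R x + b *\<^sub>R y)) = a *\<^sub>R F (u(j := x)) + b *\<^sub>R F (u(j := y))) \<and>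
     (\<exists>C. \<forall>u. (\<forall>j<k. in_Halpha c \<alpha> \<beta> e (u j)) \<longrightarrow>
        norm (F u) \<le> C * (\<Prod>j<k. norm_alpha c \<alpha> \<beta> e (u j)))"

definition z_sigma :: "real \<Rightarrow> (real \<Rightarrow> 'o \<Rightarrow> real) \<Rightarrow> 'o \<Rightarrow> real" where
  "z_sigma \<sigma> W \<omega> = - \<sigma> * integral {..0} (\<lambda>\<tau>. exp \<tau> * W \<tau> \<omega>)"

definition hhat_app ::
  "nat \<Rightarrow> real \<Rightarrow> (nat \<Rightarrow> real) \<Rightarrow> (nat \<Rightarrow> 'a::real_inner) \<Rightarrow> nat \<Rightarrow> ((nat \<Rightarrow> 'a) \<Rightarrow> 'a)
     \<Rightarrow> (real \<Rightarrow> 'o \<Rightarrow> real) \<Rightarrow> 'a \<Rightarrow> 'o \<Rightarrow> 'a" where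
  "hhat_app k \<sigma> \<beta> e m F W \<xi> \<omega> =
     integral {..0} (\<lambda>s. exp (\<sigma> * (real k - 1) * W s \<omega>) *\<^sub>R
        sg \<beta> e (- s) (Ps e m (F (\<lambda>j. sg \<beta> e s \<xi>))))"

definition h_app ::
  "nat \<Rightarrow> real \<Rightarrow> (nat \<Rightarrow> real) \<Rightarrow> (nat \<Rightarrow> 'a::real_inner) \<Rightarrow> nat \<Rightarrow> ((nat \<Rightarrow> 'a) \<Rightarrow> 'a)
     \<Rightarrow> (real \<Rightarrow> 'o \<Rightarrow> real) \<Rightarrow> 'a \<Rightarrow> 'o \<Rightarrow> 'a" where
  "h_app k \<sigma> \<beta> e m F W \<xi> \<omega> =
     exp ((real k - 1) * z_sigma \<sigma> W \<omega>) *\<^sub>R hhat_app k \<sigma> \<beta> e m F W \<xi> \<omega>"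

definition M_coef ::
  "nat \<Rightarrow> real \<Rightarrow> (nat \<Rightarrow> real) \<Rightarrow> (real \<Rightarrow> 'o \<Rightarrow> real) \<Rightarrow> nat \<Rightarrow> (nat \<Rightarrow> nat) \<Rightarrow> 'o \<Rightarrow> real" where
  "M_coef k \<sigma> \<beta> W n i \<omega> =
     integral {..0} (\<lambda>s. exp (((\<Sum>j<k. \<beta> (i j)) - \<beta> n) * s + \<sigma> * (real k - 1) * W s \<omega>))"

definition hom_poly :: "nat \<Rightarrow> nat \<Rightarrow> ((nat \<Rightarrow> real) \<Rightarrow> real) \<Rightarrow> bool" where
  "hom_poly m p P \<longleftrightarrow>
     (\<exists>a. \<forall>x. P x = (\<Sum>\<gamma>\<in>{\<gamma>::nat \<Rightarrow> nat. (\<forall>i. m \<le> i \<longrightarrow> \<gamma> i = 0) \<and> sum \<gamma> {..<m} = p}.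
                       a \<gamma> * (\<Prod>i<m. x i ^ \<gamma> i)))"

definition random_hom_poly ::
  "'o measure \<Rightarrow> real \<Rightarrow> real \<Rightarrow> (nat \<Rightarrow> real) \<Rightarrow> (nat \<Rightarrow> 'a::real_inner) \<Rightarrow> nat \<Rightarrow> nat
     \<Rightarrow> ('a \<Rightarrow> 'o \<Rightarrow> 'a) \<Rightarrow> bool" where
  "random_hom_poly M c \<alpha> \<beta> e m p g \<longleftrightarrow>
     (\<exists>gn :: nat \<Rightarrow> 'a \<Rightarrow> 'o \<Rightarrow> real.
        (\<forall>\<xi>\<in>Hc e m. \<forall>\<omega>\<in>space M.
            (\<lambda>n. if m \<le> n then gn n \<xi> \<omega> *\<^sub>R e n else 0) sums g \<xi> \<omega> \<and>
            in_Halpha c \<alpha> \<beta> e (g \<xi> \<omega>)) \<and>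
        (\<forall>n\<ge>m. \<forall>\<xi>\<in>Hc e m. (\<lambda>\<omega>. gn n \<xi> \<omega>) \<in> borel_measurable M) \<and>
        (\<forall>n\<ge>m. \<forall>\<omega>\<in>space M. \<exists>P. hom_poly m p P \<and>
            (\<forall>\<xi>\<in>Hc e m. gn n \<xi> \<omega> = P (\<lambda>i. inner \<xi> (e i)))))"

definition small_error ::
  "'o measure \<Rightarrow> real \<Rightarrow> real \<Rightarrow> (nat \<Rightarrow> real) \<Rightarrow> (nat \<Rightarrow> 'a::real_inner) \<Rightarrow> nat \<Rightarrow> nat
     \<Rightarrow> ('a \<Rightarrow> 'o \<Rightarrow> 'a) \<Rightarrow> ('a \<Rightarrow> 'o \<Rightarrow> 'a) \<Rightarrow> bool" where
  "small_error M c \<alpha> \<beta> e m p h g \<longleftrightarrow>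
     (\<forall>\<omega>\<in>space M. \<forall>\<epsilon>>0. \<exists>\<delta>>0. \<forall>\<xi>\<in>Hc e m.
        norm_alpha c \<alpha> \<beta> e \<xi> < \<delta> \<longrightarrow>
        norm_alpha c \<alpha> \<beta> e (h \<xi> \<omega> - g \<xi> \<omega>) \<le> \<epsilon> * norm_alpha c \<alpha> \<beta> e \<xi> ^ p)"

definition leading_order_taylor ::
  "'o measure \<Rightarrow> real \<Rightarrow> real \<Rightarrow> (nat \<Rightarrow> real) \<Rightarrow> (nat \<Rightarrow> 'a::real_inner) \<Rightarrow> nat \<Rightarrow> nat
     \<Rightarrow> ('a \<Rightarrow> 'o \<Rightarrow> 'a) \<Rightarrow> ('a \<Rightarrow> 'o \<Rightarrow> 'a) \<Rightarrow> bool" where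
  "leading_order_taylor M c \<alpha> \<beta> e m k g h \<longleftrightarrow>
     random_hom_poly M c \<alpha> \<beta> e m k g \<and> small_error M c \<alpha> \<beta> e m k h g"

end

theory Submission
  imports Defs
begin


typedef (overloaded) ('a::real_inner) hc = "UNIV :: 'a set" by simp

setup_lifting type_definition_hc

instantiation hc :: (real_inner) real_inner
begin
lift_definition zero_hc :: "'a hc" is 0 .
lift_definition plus_hc :: "'a hc \<Rightarrow> 'a hc \<Rightarrow> 'a hc" is "(+)" .
lift_definition minus_hc :: "'a hc \<Rightarrow> 'a hc \<Rightarrow> 'a hc" is "(-)" .
lift_definition uminus_hc :: "'a hc \<Rightarrow> 'a hc" is uminus .
lift_definition scaleR_hc :: "real \<Rightarrow> 'a hc \<Rightarrow> 'a hc" is scaleR .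
lift_definition norm_hc :: "'a hc \<Rightarrow> real" is norm .
lift_definition sgn_hc :: "'a hc \<Rightarrow> 'a hc" is sgn .
lift_definition dist_hc :: "'a hc \<Rightarrow> 'a hc \<Rightarrow> real" is dist .
lift_definition inner_hc :: "'a hc \<Rightarrow> 'a hc \<Rightarrow> real" is inner .
definition uniformity_hc :: "('a hc \<times> 'a hc) filter" where
  "uniformity_hc = (INF e\<in>{0<..}. principal {(x, y). dist x y < e})"
definition open_hc :: "'a hc set \<Rightarrow> bool" where
  "open_hc U = (\<forall>x\<in>U. eventually (\<lambda>(x', y). x' = x \<longrightarrow> y \<in> U) uniformity)"
instance
proof
qed (transfer; simp add: algebra_simps dist_norm sgn_div_norm inner_commute inner_add_left
        norm_eq_sqrt_inner uniformity_hc_def open_hc_def)+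
end

instance hc :: ("{real_inner,complete_space}") complete_space
proof
  fix X :: "nat \<Rightarrow> 'a hc" assume "Cauchy X"
  then have "Cauchy (\<lambda>n. Rep_hc (X n))"
    unfolding Cauchy_def by (simp add: dist_hc.rep_eq)
  then obtain L where L: "(\<lambda>n. Rep_hc (X n)) \<longlonglongrightarrow> L"
    using Cauchy_convergent_iff convergent_def by blast
  have "X \<longlonglongrightarrow> Abs_hc L"
    unfolding tendsto_iff dist_hc.rep_eq using L[unfolded tendsto_iff] by (simp add: Abs_hc_inverse)
  then show "convergent X" unfolding convergent_def by blast
qed

instance hc :: ("{real_inner,complete_space}") banach ..

lemma bl_Rep_hc: "bounded_linear Rep_hc"
  by (rule bounded_linear_intro[where K=1]) (auto simp: plus_hc.rep_eq scaleR_hc.rep_eq norm_hc.rep_eq)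

lemma bl_Abs_hc: "bounded_linear (Abs_hc :: 'a::real_inner \<Rightarrow> 'a hc)"
  by (rule bounded_linear_intro[where K=1]) (auto simp: plus_hc.abs_eq scaleR_hc.abs_eq norm_hc.abs_eq eq_onp_same_args)

lemma norm_Abs_hc: "norm (Abs_hc x) = norm x"
  by (simp add: norm_hc.abs_eq eq_onp_same_args)

lemma integrable_via_hc:
  fixes f :: "'n::euclidean_space \<Rightarrow> 'a::real_inner"
  assumes "(\<lambda>x. Abs_hc (f x)) integrable_on S"
  shows "f integrable_on S"
proof -
  have "(Rep_hc \<circ> (\<lambda>x. Abs_hc (f x))) integrable_on S"
    by (rule integrable_linear[OF assms bl_Rep_hc])
  then show ?thesis by (simp add: o_def Abs_hc_inverse)
qed

lemma integrable_to_hc: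
  fixes f :: "'n::euclidean_space \<Rightarrow> 'a::real_inner"
  assumes "f integrable_on S"
  shows "(\<lambda>x. Abs_hc (f x)) integrable_on S"
  using integrable_linear[OF assms bl_Abs_hc] by (simp add: o_def)


context fixes e :: "nat \<Rightarrow> 'a::{real_inner,complete_space}"
begin

lemma hb_orth: "hilbert_basis e \<Longrightarrow> inner (e i) (e j) = (if i = j then 1 else 0)"
  unfolding hilbert_basis_def by blast

lemma hb_expand: "hilbert_basis e \<Longrightarrow> (\<lambda>n. inner u (e n) *\<^sub>R e n) sums u"
  unfolding hilbert_basis_def by blast

lemma hb_comp_eq:
  assumes "hilbert_basis e" "\<And>n. inner x (e n) = inner y (e n)"
  shows "x = y"
proof -
  have "(\<lambda>n. inner x (e n) *\<^sub>R e n) sums x" "(\<lambda>n. inner x (e n) *\<^sub>R e n) sums y"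
    using hb_expand[OF assms(1), of x] hb_expand[OF assms(1), of y] assms(2) by auto
  then show ?thesis using sums_unique2 by blast
qed

lemma hb_finite_norm:
  assumes "hilbert_basis e" "finite A"
  shows "(norm (\<Sum>n\<in>A. a n *\<^sub>R e n))\<^sup>2 = (\<Sum>n\<in>A. (a n)\<^sup>2)"
proof -
  have "(norm (\<Sum>n\<in>A. a n *\<^sub>R e n))\<^sup>2 = inner (\<Sum>n\<in>A. a n *\<^sub>R e n) (\<Sum>n\<in>A. a n *\<^sub>R e n)"
    by (simp add: power2_norm_eq_inner)
  also have "\<dots> = (\<Sum>n\<in>A. (a n)\<^sup>2)"
    using assms(2) by (simp add: inner_sum_left inner_sum_right hb_orth[OF assms(1)] power2_eq_square if_distrib sum.delta' cong: if_cong)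
  finally show ?thesis .
qed

lemma hb_parseval:
  assumes "hilbert_basis e"
  shows "(\<lambda>n. (inner u (e n))\<^sup>2) sums (norm u)\<^sup>2"
proof -
  have "(\<lambda>N. \<Sum>n<N. inner u (e n) *\<^sub>R e n) \<longlonglongrightarrow> u"
    using hb_expand[OF assms] unfolding sums_def .
  then have "(\<lambda>N. (norm (\<Sum>n<N. inner u (e n) *\<^sub>R e n))\<^sup>2) \<longlonglongrightarrow> (norm u)\<^sup>2"
    by (intro tendsto_intros)
  then show ?thesis
    unfolding sums_def using hb_finite_norm[OF assms] by simp
qed

lemma hb_series_summable:
  assumes "hilbert_basis e" "summable (\<lambda>n. (a n)\<^sup>2)"
  shows "summable (\<lambda>n. a n *\<^sub>R e n)"
proof -
  have "summable (\<lambda>n. Abs_hc (a n *\<^sub>R e n))"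
    unfolding summable_Cauchy
  proof (intro allI impI)
    fix r :: real assume r: "r > 0"
    have r2: "r\<^sup>2 > 0" using r by simp
    obtain N where
      N: "\<forall>m\<ge>N. \<forall>n. norm (sum (\<lambda>n. (a n)\<^sup>2) {m..<n}) < r\<^sup>2"
      using assms(2)[unfolded summable_Cauchy] r2 by blast
    show "\<exists>N. \<forall>m\<ge>N. \<forall>n. norm (\<Sum>i=m..<n. Abs_hc (a i *\<^sub>R e i)) < r"
    proof (intro exI allI impI)
      fix m n assume "m \<ge> N"
      then have "(norm (\<Sum>i=m..<n. a i *\<^sub>R e i))\<^sup>2 < r\<^sup>2"
      proof -
        have "(\<Sum>i=m..<n. (a i)\<^sup>2) \<le> norm (\<Sum>i=m..<n. (a i)\<^sup>2)" by (metis abs_ge_self real_norm_def)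
        also have "\<dots> < r\<^sup>2" using N \<open>m \<ge> N\<close> by blast
        finally show ?thesis using hb_finite_norm[OF assms(1), of "{m..<n}" a] by simp
      qed
      then have "norm (\<Sum>i=m..<n. a i *\<^sub>R e i) < r"
        by (rule power2_less_imp_less) (use r in auto)
      moreover have "(\<Sum>i=m..<n. Abs_hc (a i *\<^sub>R e i)) = Abs_hc (\<Sum>i=m..<n. a i *\<^sub>R e i)"
        using linear_sum[OF bounded_linear.linear[OF bl_Abs_hc]] by metis
      ultimately show "norm (\<Sum>i=m..<n. Abs_hc (a i *\<^sub>R e i)) < r"
        by (simp add: norm_Abs_hc)
    qed
  qed
  from bounded_linear.summable[OF bl_Rep_hc this] show ?thesis
    by (simp add: Abs_hc_inverse)
qed

lemma hb_series_comp:
  assumes "hilbert_basis e" "summable (\<lambda>n. (a n)\<^sup>2)"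
  shows "inner (\<Sum>n. a n *\<^sub>R e n) (e j) = a j"
proof -
  have "(\<lambda>n. a n *\<^sub>R e n) sums (\<Sum>n. a n *\<^sub>R e n)"
    using hb_series_summable[OF assms] by (simp add: summable_sums)
  then have "(\<lambda>n. inner (a n *\<^sub>R e n) (e j)) sums inner (\<Sum>n. a n *\<^sub>R e n) (e j)"
    by (rule bounded_linear.sums[OF bounded_linear_inner_left])
  moreover have "(\<lambda>n. inner (a n *\<^sub>R e n) (e j)) = (\<lambda>n. if n = j then a n else 0)"
    using hb_orth[OF assms(1)] by auto
  ultimately show ?thesis
    using sums_single[of j a] sums_unique2 by metis
qed


lemma hb_norm2:
  assumes "hilbert_basis e"
  shows "(norm u)\<^sup>2 = (\<Sum>n. (inner u (e n))\<^sup>2)" "summable (\<lambda>n. (inner u (e n))\<^sup>2)"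
  using hb_parseval[OF assms, of u] by (auto simp: sums_iff)

lemma hb_Ps_eq:
  "Ps e m u = (\<Sum>n. (if m \<le> n then inner u (e n) else 0) *\<^sub>R e n)"
  unfolding Ps_def by (intro arg_cong[where f=suminf] ext) auto

lemma hb_Ps_sq_summable:
  assumes "hilbert_basis e"
  shows "summable (\<lambda>n. (if m \<le> n then inner u (e n) else 0)\<^sup>2)"
  by (rule summable_comparison_test'[OF hb_norm2(2)[OF assms, of u], where N=0]) auto

lemma hb_Ps_comp:
  assumes "hilbert_basis e"
  shows "inner (Ps e m u) (e n) = (if m \<le> n then inner u (e n) else 0)"
  unfolding hb_Ps_eq using hb_series_comp[OF assms hb_Ps_sq_summable[OF assms]] .

lemma hb_sg_comp:
  assumes "hilbert_basis e" "summable (\<lambda>n. (exp (\<beta> n * t) * inner u (e n))\<^sup>2)"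
  shows "inner (sg \<beta> e t u) (e n) = exp (\<beta> n * t) * inner u (e n)"
  unfolding sg_def using hb_series_comp[OF assms] .

lemma hb_sg_comp_nonneg:
  assumes "hilbert_basis e" "\<And>n. \<beta> n \<le> \<beta> 0" "t \<ge> 0"
  shows "inner (sg \<beta> e t u) (e n) = exp (\<beta> n * t) * inner u (e n)"
proof (rule hb_sg_comp[OF assms(1)])
  show "summable (\<lambda>n. (exp (\<beta> n * t) * inner u (e n))\<^sup>2)"
  proof (rule summable_comparison_test'[where N=0])
    show "summable (\<lambda>n. (exp (\<beta> 0 * t))\<^sup>2 * (inner u (e n))\<^sup>2)"
      using hb_norm2(2)[OF assms(1), of u] by (rule summable_mult)
    fix n :: nat
    have "exp (\<beta> n * t) \<le> exp (\<beta> 0 * t)"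
      using assms(2)[of n] assms(3) by (simp add: mult_right_mono)
    then have "(exp (\<beta> n * t))\<^sup>2 \<le> (exp (\<beta> 0 * t))\<^sup>2"
      by (simp add: power_mono)
    then show "norm ((exp (\<beta> n * t) * inner u (e n))\<^sup>2) \<le> (exp (\<beta> 0 * t))\<^sup>2 * (inner u (e n))\<^sup>2"
      by (simp add: power_mult_distrib mult_right_mono)
  qed
qed

lemma Hc_comp_zero:
  assumes "hilbert_basis e" "\<xi> \<in> Hc e m" "m \<le> n"
  shows "inner \<xi> (e n) = 0"
  using assms(2) unfolding Hc_def
proof (induction rule: span_induct_alt)
  case base then show ?case by simp
next
  case (step c x y)
  then obtain l where "l < m" "x = e l" by auto
  then show ?case using step assms(3) hb_orth[OF assms(1), of l n]
    by (simp add: inner_add_left)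
qed

lemma Hc_eq_sum:
  assumes "hilbert_basis e" "\<xi> \<in> Hc e m"
  shows "\<xi> = (\<Sum>l<m. inner \<xi> (e l) *\<^sub>R e l)"
proof -
  have "(\<lambda>n. inner \<xi> (e n) *\<^sub>R e n) sums (\<Sum>l<m. inner \<xi> (e l) *\<^sub>R e l)"
    by (rule sums_finite) (use Hc_comp_zero[OF assms] in auto)
  then show ?thesis using hb_expand[OF assms(1), of \<xi>] sums_unique2 by blast
qed

lemma sg_Hc:
  assumes "hilbert_basis e" "\<xi> \<in> Hc e m"
  shows "sg \<beta> e t \<xi> = (\<Sum>l<m. (exp (\<beta> l * t) * inner \<xi> (e l)) *\<^sub>R e l)"
  unfolding sg_def by (rule suminf_finite) (use Hc_comp_zero[OF assms] in auto)

lemma Halpha_zero: "in_Halpha c \<alpha> \<beta> e 0"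
  unfolding in_Halpha_def by simp

lemma Halpha_lincomb:
  assumes "in_Halpha c \<alpha> \<beta> e x" "in_Halpha c \<alpha> \<beta> e y"
  shows "in_Halpha c \<alpha> \<beta> e (a *\<^sub>R x + b *\<^sub>R y)"
  unfolding in_Halpha_def
proof (rule summable_comparison_test'[where N=0])
  let ?w = "\<lambda>n. (c - \<beta> n) powr (2 * \<alpha>)"
  show "summable (\<lambda>n. 2 * a\<^sup>2 * (?w n * (inner x (e n))\<^sup>2) + 2 * b\<^sup>2 * (?w n * (inner y (e n))\<^sup>2))"
    using assms unfolding in_Halpha_def by (intro summable_add summable_mult)
  fix n :: nat
  define X where "X = inner x (e n)"
  define Y where "Y = inner y (e n)"
  have w: "?w n \<ge> 0" by simp
  have h: "0 \<le> (a*X - b*Y)\<^sup>2" by simp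
  then have "(a * X + b * Y)\<^sup>2 \<le> 2 * a\<^sup>2 * X\<^sup>2 + 2 * b\<^sup>2 * Y\<^sup>2"
    by (simp add: power2_sum power2_diff power_mult_distrib algebra_simps)
  then have "?w n * (a * X + b * Y)\<^sup>2 \<le> ?w n * (2 * a\<^sup>2 * X\<^sup>2 + 2 * b\<^sup>2 * Y\<^sup>2)"
    by (rule mult_left_mono[OF _ w])
  also have "\<dots> = 2 * a\<^sup>2 * (?w n * X\<^sup>2) + 2 * b\<^sup>2 * (?w n * Y\<^sup>2)"
    by (simp add: algebra_simps)
  finally have le: "?w n * (a * X + b * Y)\<^sup>2 \<le> 2 * a\<^sup>2 * (?w n * X\<^sup>2) + 2 * b\<^sup>2 * (?w n * Y\<^sup>2)" .
  have eq: "inner (a *\<^sub>R x + b *\<^sub>R y) (e n) = a * X + b * Y"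
    by (simp add: X_def Y_def inner_add_left)
  have nn: "?w n * (a * X + b * Y)\<^sup>2 \<ge> 0" using w by simp
  show "norm (?w n * (inner (a *\<^sub>R x + b *\<^sub>R y) (e n))\<^sup>2) \<le>
      2 * a\<^sup>2 * (?w n * (inner x (e n))\<^sup>2) + 2 * b\<^sup>2 * (?w n * (inner y (e n))\<^sup>2)"
    unfolding eq X_def[symmetric] Y_def[symmetric] using le nn by simp
qed

lemma Halpha_sum:
  assumes "finite L" "\<And>l. l \<in> L \<Longrightarrow> in_Halpha c \<alpha> \<beta> e (y l)"
  shows "in_Halpha c \<alpha> \<beta> e (\<Sum>l\<in>L. a l *\<^sub>R y l)"
  using assms
proof (induction L rule: finite_induct)
  case empty then show ?case by (simp add: Halpha_zero)
next
  case (insert l L)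
  then show ?case
    using Halpha_lincomb[of c \<alpha> \<beta> "y l" "\<Sum>l\<in>L. a l *\<^sub>R y l" "a l" 1] by simp
qed

lemma Halpha_e:
  assumes "hilbert_basis e"
  shows "in_Halpha c \<alpha> \<beta> e (e l)"
proof -
  have "(\<lambda>n. (c - \<beta> n) powr (2 * \<alpha>) * (inner (e l) (e n))\<^sup>2) = (\<lambda>n. if n = l then (c - \<beta> n) powr (2 * \<alpha>) else 0)"
    using hb_orth[OF assms] by auto
  then show ?thesis unfolding in_Halpha_def
    using sums_single[of l "\<lambda>n. (c - \<beta> n) powr (2 * \<alpha>)"] sums_summable by metis
qed


end


context fixes e :: "nat \<Rightarrow> 'a::{real_inner,complete_space}"
begin

lemma klin_eq:
  assumes "cont_klinear c \<alpha> \<beta> e k F" "\<And>j. j < k \<Longrightarrow> u j = v j"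
  shows "F u = F v"
  using assms unfolding cont_klinear_def by blast

lemma klin_lin:
  assumes "cont_klinear c \<alpha> \<beta> e k F" "\<And>i. i < k \<Longrightarrow> in_Halpha c \<alpha> \<beta> e (u i)" "j < k"
    "in_Halpha c \<alpha> \<beta> e x" "in_Halpha c \<alpha> \<beta> e y"
  shows "F (u(j := a *\<^sub>R x + b *\<^sub>R y)) = a *\<^sub>R F (u(j := x)) + b *\<^sub>R F (u(j := y))"
  using assms unfolding cont_klinear_def by blast

lemma klin_slot_sum:
  assumes F: "cont_klinear c \<alpha> \<beta> e k F" and u: "\<And>i. i < k \<Longrightarrow> in_Halpha c \<alpha> \<beta> e (u i)"
    and j: "j < k" and L: "finite L" and y: "\<And>l. l \<in> L \<Longrightarrow> in_Halpha c \<alpha> \<beta> e (y l)"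
  shows "F (u(j := \<Sum>l\<in>L. a l *\<^sub>R y l)) = (\<Sum>l\<in>L. a l *\<^sub>R F (u(j := y l)))"
  using L y
proof (induction L rule: finite_induct)
  case empty
  have "F (u(j := 0 *\<^sub>R 0 + 0 *\<^sub>R 0)) = 0 *\<^sub>R F (u(j := 0)) + 0 *\<^sub>R F (u(j := 0))"
    by (rule klin_lin[OF F u j Halpha_zero Halpha_zero])
  then show ?case by (simp del: fun_upd_apply)
next
  case (insert l L)
  have S: "in_Halpha c \<alpha> \<beta> e (\<Sum>l\<in>L. a l *\<^sub>R y l)"
    using insert by (intro Halpha_sum) auto
  have "F (u(j := a l *\<^sub>R y l + 1 *\<^sub>R (\<Sum>l\<in>L. a l *\<^sub>R y l))) =
        a l *\<^sub>R F (u(j := y l)) + 1 *\<^sub>R F (u(j := \<Sum>l\<in>L. a l *\<^sub>R y l))"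
    by (rule klin_lin[OF F u j]) (use insert S in auto)
  then show ?case using insert by (simp del: fun_upd_apply)
qed

lemma klin_expand_gen:
  fixes a :: "nat \<Rightarrow> nat \<Rightarrow> real" and m :: nat
  assumes F: "cont_klinear c \<alpha> \<beta> e k F" and basis: "hilbert_basis e" and p: "p \<le> k"
  defines "V \<equiv> \<lambda>j. \<Sum>l<m. a j l *\<^sub>R e l"
  shows "F V = (\<Sum>i\<in>{..<p} \<rightarrow>\<^sub>E {..<m}. (\<Prod>j<p. a j (i j)) *\<^sub>R F (\<lambda>j. if j < p then e (i j) else V j))"
  using p
proof (induction p)
  case 0
  then show ?case by simp
next
  case (Suc p)
  then have IH: "F V = (\<Sum>i\<in>{..<p} \<rightarrow>\<^sub>E {..<m}. (\<Prod>j<p. a j (i j)) *\<^sub>R F (\<lambda>j. if j < p then e (i j) else V j))"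
    and pk: "p < k" by auto
  have VH: "in_Halpha c \<alpha> \<beta> e (V j)" for j
    unfolding V_def by (rule Halpha_sum) (auto intro: Halpha_e[OF basis])
  have step: "F (\<lambda>j. if j < p then e (i j) else V j) =
      (\<Sum>l<m. a p l *\<^sub>R F (\<lambda>j. if j < Suc p then e ((i(p := l)) j) else V j))" for i
  proof -
    let ?u = "\<lambda>j. if j < p then e (i j) else V j"
    have u: "in_Halpha c \<alpha> \<beta> e (?u j)" for j
      using VH Halpha_e[OF basis] by auto
    have "?u = ?u(p := \<Sum>l<m. a p l *\<^sub>R e l)"
      by (auto simp: V_def)
    then have "F ?u = F (?u(p := \<Sum>l<m. a p l *\<^sub>R e l))" by simp
    also have "\<dots> = (\<Sum>l<m. a p l *\<^sub>R F (?u(p := e l)))"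
      by (rule klin_slot_sum[OF F u pk]) (auto intro: Halpha_e[OF basis])
    also have "\<dots> = (\<Sum>l<m. a p l *\<^sub>R F (\<lambda>j. if j < Suc p then e ((i(p := l)) j) else V j))"
      by (intro sum.cong refl arg_cong[where f="\<lambda>x. _ *\<^sub>R x"] arg_cong[where f=F]) auto
    finally show ?thesis .
  qed
  let ?G = "\<lambda>i. (\<Prod>j<Suc p. a j (i j)) *\<^sub>R F (\<lambda>j. if j < Suc p then e (i j) else V j)"
  have "F V = (\<Sum>i\<in>{..<p} \<rightarrow>\<^sub>E {..<m}. \<Sum>l<m. ?G (i(p := l)))"
    unfolding IH step
  proof (intro sum.cong refl)
    fix i assume i: "i \<in> {..<p} \<rightarrow>\<^sub>E {..<m}"
    show "(\<Prod>j<p. a j (i j)) *\<^sub>R (\<Sum>l<m. a p l *\<^sub>R F (\<lambda>j. if j < Suc p then e ((i(p := l)) j) else V j))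
        = (\<Sum>l<m. ?G (i(p := l)))"
    proof -
      have "(\<Prod>j<Suc p. a j ((i(p := l)) j)) = a p l * (\<Prod>j<p. a j (i j))" for l
        by (simp add: lessThan_Suc prod.insert)
      then show ?thesis
        by (simp add: scaleR_sum_right mult.commute)
    qed
  qed
  also have "\<dots> = (\<Sum>(i, l)\<in>({..<p} \<rightarrow>\<^sub>E {..<m}) \<times> {..<m}. ?G (i(p := l)))"
    by (simp add: sum.cartesian_product)
  also have "\<dots> = (\<Sum>i\<in>{..<Suc p} \<rightarrow>\<^sub>E {..<m}. ?G i)"
    by (rule sum.reindex_bij_witness[of _ "\<lambda>i. (i(p := undefined), i p)" "\<lambda>(i, l). i(p := l)"])
       (auto simp: PiE_def extensional_def lessThan_Suc)
  finally show ?case .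
qed

lemma klin_expand:
  assumes F: "cont_klinear c \<alpha> \<beta> e k F" and basis: "hilbert_basis e"
  shows "F (\<lambda>j. \<Sum>l<m. a j l *\<^sub>R e l) =
     (\<Sum>i\<in>{..<k} \<rightarrow>\<^sub>E {..<m}. (\<Prod>j<k. a j (i j)) *\<^sub>R F (\<lambda>j. e (i j)))"
proof -
  have "F (\<lambda>j. \<Sum>l<m. a j l *\<^sub>R e l) = (\<Sum>i\<in>{..<k} \<rightarrow>\<^sub>E {..<m}. (\<Prod>j<k. a j (i j)) *\<^sub>R
      F (\<lambda>j. if j < k then e (i j) else \<Sum>l<m. a j l *\<^sub>R e l))"
    by (rule klin_expand_gen[OF F basis order_refl])
  also have "\<dots> = (\<Sum>i\<in>{..<k} \<rightarrow>\<^sub>E {..<m}. (\<Prod>j<k. a j (i j)) *\<^sub>R F (\<lambda>j. e (i j)))"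
    by (intro sum.cong refl arg_cong[where f="\<lambda>x. _ *\<^sub>R x"] klin_eq[OF F]) auto
  finally show ?thesis .
qed

end


lemma sublin_bound:
  fixes w :: "real \<Rightarrow> real"
  assumes cont: "continuous_on UNIV w" and lim: "((\<lambda>t. w t / t) \<longlongrightarrow> 0) at_bot" and eps: "\<epsilon> > 0"
  shows "\<exists>C\<ge>0. \<forall>s\<le>0. \<bar>w s\<bar> \<le> C + \<epsilon> * (- s)"
proof -
  have "eventually (\<lambda>t. \<bar>w t / t\<bar> < \<epsilon>) at_bot"
    using lim eps by (simp add: tendsto_iff dist_real_def) 
  then obtain T0 where T0: "\<And>t. t \<le> T0 \<Longrightarrow> \<bar>w t / t\<bar> < \<epsilon>"
    by (auto simp: eventually_at_bot_linorder)
  define T where "T = min T0 (-1)"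
  have T: "\<And>t. t \<le> T \<Longrightarrow> \<bar>w t / t\<bar> < \<epsilon>" by (rule T0) (simp add: T_def)
  have T': "T < 0" by (simp add: T_def)
  have "compact (w ` {T..0})"
    by (rule compact_continuous_image) (auto intro: continuous_on_subset[OF cont])
  then have "bounded (w ` {T..0})" by (rule compact_imp_bounded)
  then obtain B where B: "\<And>x. x \<in> w ` {T..0} \<Longrightarrow> norm x \<le> B"
    unfolding bounded_iff by blast
  define C where "C = max B 0"
  show ?thesis
  proof (intro exI[of _ C] conjI allI impI)
    show "C \<ge> 0" by (simp add: C_def)
    fix s :: real assume s: "s \<le> 0"
    show "\<bar>w s\<bar> \<le> C + \<epsilon> * (- s)"
    proof (cases "s \<le> T")
      case True
      then have "s < 0" using T' by auto
      have "\<bar>w s\<bar> = \<bar>w s / s\<bar> * (-s)" using \<open>s < 0\<close> by (simp add: abs_divide)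
      also have "\<dots> < \<epsilon> * (-s)"
        by (rule mult_strict_right_mono[OF T(1)[OF True]]) (use \<open>s < 0\<close> in simp)
      finally show ?thesis using \<open>s < 0\<close> by (simp add: C_def)
    next
      case False
      then have "\<bar>w s\<bar> \<le> B" using B[of "w s"] s by auto
      moreover have "\<epsilon> * (- s) \<ge> 0" using s eps by (simp add: mult_le_0_iff)
      moreover have "B \<le> C" by (simp add: C_def)
      ultimately show ?thesis by linarith
    qed
  qed
qed

lemma exp_has_integral_neg:
  fixes q :: real
  assumes q: "q > 0"
  shows "(\<lambda>s. exp (q * s)) absolutely_integrable_on {..0}"
        "((\<lambda>s. exp (q * s)) has_integral 1 / q) {..0}"
proof -
  have h: "((\<lambda>x. exp (-q*x)) has_integral exp (-q*0)/q) {0..}"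
    by (rule has_integral_exp_minus_to_infinity[OF q])
  have ai: "(\<lambda>x. exp (-q*x)) absolutely_integrable_on {0..}"
    by (rule nonnegative_absolutely_integrable_1) (use h in \<open>auto simp: integrable_on_def\<close>)
  have "(\<lambda>x. (\<lambda>x. exp (-q*x)) (-x)) absolutely_integrable_on {..0} \<and>
        integral {..0} (\<lambda>x. (\<lambda>x. exp (-q*x)) (-x)) = 1 / q"
    by (subst has_absolute_integral_reflect_real[where B="{0..}"])
       (use ai h in \<open>auto simp: integral_unique image_def\<close>)
  then have *: "(\<lambda>s. exp (q * s)) absolutely_integrable_on {..0}" "integral {..0} (\<lambda>s. exp (q * s)) = 1 / q"
    by auto
  show "(\<lambda>s. exp (q * s)) absolutely_integrable_on {..0}" by (fact *)
  show "((\<lambda>s. exp (q * s)) has_integral 1 / q) {..0}"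
    using set_lebesgue_integral_eq_integral(1)[OF *(1)] *(2) by (metis has_integral_integral)
qed

lemma dominated_exp_integrable:
  fixes \<phi> :: "real \<Rightarrow> real"
  assumes cont: "continuous_on UNIV \<phi>" and q: "q > 0"
    and bound: "\<And>s. s \<le> 0 \<Longrightarrow> \<bar>\<phi> s\<bar> \<le> A * exp (q * s)"
  shows "\<phi> absolutely_integrable_on {..0}" "\<phi> integrable_on {..0}"
    "\<bar>integral {..0} \<phi>\<bar> \<le> A / q"
    "set_integrable lborel {..0} \<phi>"
proof -
  have g: "((\<lambda>s. A * exp (q * s)) has_integral A * (1 / q)) {..0}"
    using has_integral_mult_right[OF exp_has_integral_neg(2)[OF q]] .
  have meas: "\<phi> \<in> borel_measurable (lebesgue_on {..0})"
    by (rule continuous_imp_measurable_on_sets_lebesgue) (auto intro: continuous_on_subset[OF cont])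
  show int: "\<phi> integrable_on {..0}"
    by (rule measurable_bounded_by_integrable_imp_integrable_real[OF meas _ bound])
       (use g in \<open>auto simp: integrable_on_def\<close>)
  show ai: "\<phi> absolutely_integrable_on {..0}"
    by (rule absolutely_integrable_integrable_bound[OF _ int, where g="\<lambda>s. A * exp (q * s)"])
       (use bound g in \<open>auto simp: integrable_on_def\<close>)
  have "norm (integral {..0} \<phi>) \<le> integral {..0} (\<lambda>s. A * exp (q * s))"
    by (rule integral_norm_bound_integral[OF int]) (use bound g in \<open>auto simp: integrable_on_def\<close>)
  moreover have "integral {..0} (\<lambda>s. A * exp (q * s)) = A / q"
    using integral_unique[OF g] by simp
  ultimately show "\<bar>integral {..0} \<phi>\<bar> \<le> A / q" by (metis real_norm_def)
  have bm: "(\<lambda>x. indicator {..0::real} x *\<^sub>R \<phi> x) \<in> borel_measurable lborel"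
    using borel_measurable_continuous_onI[OF cont] by measurable
  show "set_integrable lborel {..0} \<phi>"
    unfolding set_integrable_def using integrable_completion[OF bm] ai[unfolded set_integrable_def] by blast
qed

lemma joint_measurable_W:
  fixes W :: "real \<Rightarrow> 'o \<Rightarrow> real"
  assumes W_meas: "\<And>t. W t \<in> borel_measurable M"
    and W_cont: "\<And>\<omega>. \<omega> \<in> space M \<Longrightarrow> continuous_on UNIV (\<lambda>t. W t \<omega>)"
  shows "(\<lambda>p. W (snd p) (fst p)) \<in> borel_measurable (M \<Otimes>\<^sub>M (lborel :: real measure))"
proof (rule borel_measurable_LIMSEQ_metric)
  define Wn where "Wn n p = W (real_of_int \<lfloor>real (Suc n) * snd p\<rfloor> / real (Suc n)) (fst p)"
    for n :: nat and p :: "'o \<times> real"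
  show "(\<lambda>p. Wn n p) \<in> borel_measurable (M \<Otimes>\<^sub>M (lborel :: real measure))" for n
  proof -
    have f: "(\<lambda>p. W (real_of_int i / real (Suc n)) (fst p)) \<in> borel_measurable (M \<Otimes>\<^sub>M (lborel :: real measure))" for i :: int
      using W_meas by measurable
    have g: "(\<lambda>p. \<lfloor>real (Suc n) * snd p\<rfloor>) \<in> measurable (M \<Otimes>\<^sub>M (lborel :: real measure)) (count_space UNIV)"
      by measurable
    show ?thesis unfolding Wn_def
      by (rule measurable_compose_countable[OF f g])
  qed
  fix p assume p: "p \<in> space (M \<Otimes>\<^sub>M (lborel :: real measure))"
  then have pM: "fst p \<in> space M" by (auto simp: space_pair_measure)
  have conv: "(\<lambda>n. real_of_int \<lfloor>real (Suc n) * snd p\<rfloor> / real (Suc n)) \<longlonglongrightarrow> snd p"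
  proof (rule tendsto_sandwich[where f="\<lambda>n. snd p - 1 / real (Suc n)" and h="\<lambda>n. snd p"])
    show "\<forall>\<^sub>F n in sequentially. snd p - 1 / real (Suc n) \<le> real_of_int \<lfloor>real (Suc n) * snd p\<rfloor> / real (Suc n)"
    proof (intro always_eventually allI)
      fix n
      have h: "real (Suc n) * snd p - 1 \<le> real_of_int \<lfloor>real (Suc n) * snd p\<rfloor>" by linarith
      have "(real (Suc n) * snd p - 1) / real (Suc n) \<le> real_of_int \<lfloor>real (Suc n) * snd p\<rfloor> / real (Suc n)"
        by (rule divide_right_mono[OF h]) simp
      moreover have "(real (Suc n) * snd p - 1) / real (Suc n) = snd p - 1 / real (Suc n)"
        by (simp add: diff_divide_distrib)
      ultimately show "snd p - 1 / real (Suc n) \<le> real_of_int \<lfloor>real (Suc n) * snd p\<rfloor> / real (Suc n)"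
        by simp
    qed
    show "\<forall>\<^sub>F n in sequentially. real_of_int \<lfloor>real (Suc n) * snd p\<rfloor> / real (Suc n) \<le> snd p"
    proof (intro always_eventually allI)
      fix n
      have h: "real_of_int \<lfloor>real (Suc n) * snd p\<rfloor> \<le> real (Suc n) * snd p" by linarith
      have "real_of_int \<lfloor>real (Suc n) * snd p\<rfloor> / real (Suc n) \<le> real (Suc n) * snd p / real (Suc n)"
        by (rule divide_right_mono[OF h]) simp
      then show "real_of_int \<lfloor>real (Suc n) * snd p\<rfloor> / real (Suc n) \<le> snd p"
        by simp
    qed
    show "(\<lambda>n. snd p - 1 / real (Suc n)) \<longlonglongrightarrow> snd p"
      using tendsto_diff[OF tendsto_const LIMSEQ_inverse_real_of_nat, of "snd p"] by (simp add: inverse_eq_divide)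
  qed simp
  have "isCont (\<lambda>t. W t (fst p)) (snd p)"
    using W_cont[OF pM] by (simp add: continuous_on_eq_continuous_at)
  then show "(\<lambda>n. Wn n p) \<longlonglongrightarrow> W (snd p) (fst p)"
    unfolding Wn_def using isCont_tendsto_compose conv by blast
qed

lemma measurable_param_integral:
  fixes W :: "real \<Rightarrow> 'o \<Rightarrow> real" and \<Phi> :: "real \<Rightarrow> real \<Rightarrow> real"
  assumes W_meas: "\<And>t. W t \<in> borel_measurable M"
    and W_cont: "\<And>\<omega>. \<omega> \<in> space M \<Longrightarrow> continuous_on UNIV (\<lambda>t. W t \<omega>)"
    and Phi: "continuous_on UNIV (\<lambda>p. \<Phi> (fst p) (snd p))"
    and int: "\<And>\<omega>. \<omega> \<in> space M \<Longrightarrow> set_integrable lborel {..0} (\<lambda>s. \<Phi> s (W s \<omega>))"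
  shows "(\<lambda>\<omega>. integral {..0} (\<lambda>s. \<Phi> s (W s \<omega>))) \<in> borel_measurable M"
proof -
  have J[measurable]: "(\<lambda>p. W (snd p) (fst p)) \<in> borel_measurable (M \<Otimes>\<^sub>M (lborel :: real measure))"
    by (rule joint_measurable_W[OF W_meas W_cont])
  have P: "(\<lambda>p. \<Phi> (fst p) (snd p)) \<in> borel_measurable borel"
    by (rule borel_measurable_continuous_onI[OF Phi])
  have pair: "(\<lambda>p. (snd p, W (snd p) (fst p))) \<in> borel_measurable (M \<Otimes>\<^sub>M (lborel :: real measure))"
    by measurable
  have "(\<lambda>p. \<Phi> (snd p) (W (snd p) (fst p))) \<in> borel_measurable (M \<Otimes>\<^sub>M (lborel :: real measure))"
    using measurable_compose[OF pair P] by simp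
  then have "(\<lambda>p. indicator {..0::real} (snd p) *\<^sub>R \<Phi> (snd p) (W (snd p) (fst p))) \<in> borel_measurable (M \<Otimes>\<^sub>M (lborel :: real measure))"
    by measurable
  then have "(\<lambda>\<omega>. \<integral>s. indicator {..0::real} s *\<^sub>R \<Phi> s (W s \<omega>) \<partial>lborel) \<in> borel_measurable M"
    using lborel.borel_measurable_lebesgue_integral[of "\<lambda>\<omega> s. indicator {..0::real} s *\<^sub>R \<Phi> s (W s \<omega>)" M]
    by (simp add: case_prod_beta)
  then show ?thesis
  proof (rule measurable_cong[THEN iffD1, rotated])
    fix \<omega> assume "\<omega> \<in> space M"
    then show "(\<integral>s. indicator {..0::real} s *\<^sub>R \<Phi> s (W s \<omega>) \<partial>lborel) = integral {..0} (\<lambda>s. \<Phi> s (W s \<omega>))"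
      using set_borel_integral_eq_integral(2)[OF int] by (simp add: set_lebesgue_integral_def)
  qed
qed


lemma sum_sq_le_card:
  fixes x :: "'i \<Rightarrow> real"
  assumes "finite A"
  shows "(\<Sum>i\<in>A. x i)\<^sup>2 \<le> real (card A) * (\<Sum>i\<in>A. (x i)\<^sup>2)"
proof -
  have "(\<Sum>i\<in>A. x i)\<^sup>2 = (\<Sum>i\<in>A. \<Sum>j\<in>A. x i * x j)"
    by (simp add: power2_eq_square sum_product)
  also have "\<dots> \<le> (\<Sum>i\<in>A. \<Sum>j\<in>A. ((x i)\<^sup>2 + (x j)\<^sup>2) / 2)"
  proof (intro sum_mono)
    fix i j
    have "0 \<le> (x i - x j)\<^sup>2" by simp
    then show "x i * x j \<le> ((x i)\<^sup>2 + (x j)\<^sup>2) / 2"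
      by (simp add: power2_diff field_simps)
  qed
  also have "\<dots> = real (card A) * (\<Sum>i\<in>A. (x i)\<^sup>2)"
    by (simp add: sum.distrib sum_divide_distrib[symmetric] add_divide_distrib sum.swap[of "\<lambda>i j. (x j)\<^sup>2"]
        sum_distrib_left[symmetric])
  finally show ?thesis .
qed

lemma powr_ratio_bound:
  fixes x D d0 \<alpha> :: real
  assumes D: "D \<ge> 0" and d0: "d0 > 0" and xD: "x - D \<ge> d0" and \<alpha>: "0 \<le> \<alpha>" "\<alpha> < 1"
  shows "x powr (2 * \<alpha>) \<le> (((D + d0) / d0)\<^sup>2 + 1 / d0\<^sup>2) * (x - D)\<^sup>2"
proof -
  have x0: "x > 0" using D d0 xD by linarith
  have R: "x \<le> (D + d0) / d0 * (x - D)"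
  proof -
    have "x * d0 \<le> (D + d0) * (x - D)"
      using mult_left_mono[OF _ D, of d0 "x - D"] xD by (simp add: algebra_simps)
    then show ?thesis using d0 by (simp add: field_simps)
  qed
  have nn: "0 \<le> ((D + d0) / d0)\<^sup>2 * (x - D)\<^sup>2" "0 \<le> 1 / d0\<^sup>2 * (x - D)\<^sup>2" by simp_all
  show ?thesis
  proof (cases "x \<ge> 1")
    case True
    have "x powr (2 * \<alpha>) \<le> x powr 2"
      by (rule powr_mono) (use True \<alpha> in auto)
    also have "\<dots> = x\<^sup>2" using x0 by simp
    also have "\<dots> \<le> ((D + d0) / d0 * (x - D))\<^sup>2"
      by (rule power_mono[OF R]) (use x0 in simp)
    also have "\<dots> = ((D + d0) / d0)\<^sup>2 * (x - D)\<^sup>2" by (simp only: power_mult_distrib)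
    finally have "x powr (2 * \<alpha>) \<le> ((D + d0) / d0)\<^sup>2 * (x - D)\<^sup>2" .
    then show ?thesis using nn(2) by (simp only: distrib_right)
  next
    case False
    have "x powr (2 * \<alpha>) \<le> 1"
      by (rule powr_le1) (use False x0 \<alpha> in auto)
    also have "1 \<le> 1 / d0\<^sup>2 * (x - D)\<^sup>2"
    proof -
      have "d0\<^sup>2 \<le> (x - D)\<^sup>2" by (rule power_mono[OF xD]) (use d0 in simp)
      then show ?thesis using d0 by (simp add: field_simps)
    qed
    finally have "x powr (2 * \<alpha>) \<le> 1 / d0\<^sup>2 * (x - D)\<^sup>2" .
    then show ?thesis using nn(1) by (simp only: distrib_right)
  qed
qed

definition cnt :: "nat \<Rightarrow> nat \<Rightarrow> (nat \<Rightarrow> nat) \<Rightarrow> nat \<Rightarrow> nat" where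
  "cnt k m i = (\<lambda>l. if l < m then card {j\<in>{..<k}. i j = l} else 0)"

lemma hom_poly_sum:
  fixes coef :: "(nat \<Rightarrow> nat) \<Rightarrow> real"
  shows "hom_poly m k (\<lambda>x. \<Sum>i\<in>{..<k} \<rightarrow>\<^sub>E {..<m}. (\<Prod>j<k. x (i j)) * coef i)"
proof -
  let ?E = "{..<k} \<rightarrow>\<^sub>E {..<m}"
  let ?G = "{\<gamma>::nat \<Rightarrow> nat. (\<forall>i. m \<le> i \<longrightarrow> \<gamma> i = 0) \<and> sum \<gamma> {..<m} = k}"
  define a where "a \<gamma> = (\<Sum>i\<in>{i\<in>?E. cnt k m i = \<gamma>}. coef i)" for \<gamma>
  have finE: "finite ?E" by (simp add: finite_PiE)
  have finG: "finite ?G"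
  proof (rule finite_subset)
    show "?G \<subseteq> (\<lambda>f l. if l < m then f l else 0) ` ({..<m} \<rightarrow>\<^sub>E {..k})"
    proof
      fix \<gamma> assume g: "\<gamma> \<in> ?G"
      have le: "\<gamma> l \<le> k" if "l < m" for l
      proof -
        have "\<gamma> l \<le> sum \<gamma> {..<m}" by (rule member_le_sum) (use that in auto)
        then show ?thesis using g by auto
      qed
      show "\<gamma> \<in> (\<lambda>f l. if l < m then f l else 0) ` ({..<m} \<rightarrow>\<^sub>E {..k})"
      proof (rule image_eqI[where x="restrict \<gamma> {..<m}"])
        show "\<gamma> = (\<lambda>l. if l < m then restrict \<gamma> {..<m} l else 0)"
          using g by (auto simp: fun_eq_iff)
        show "restrict \<gamma> {..<m} \<in> {..<m} \<rightarrow>\<^sub>E {..k}" using le by auto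
      qed
    qed
  qed (simp add: finite_PiE)
  have cntG: "cnt k m i \<in> ?G" if i: "i \<in> ?E" for i
  proof -
    have "sum (cnt k m i) {..<m} = (\<Sum>l<m. \<Sum>j\<in>{j\<in>{..<k}. i j = l}. 1)"
      by (simp add: cnt_def)
    also have "\<dots> = (\<Sum>j<k. (1::nat))"
      by (rule sum.group) (use i in auto)
    finally show ?thesis by (auto simp: cnt_def)
  qed
  have mono: "(\<Prod>j<k. x (i j)) = (\<Prod>l<m. x l ^ cnt k m i l)" if i: "i \<in> ?E" for i and x :: "nat \<Rightarrow> real"
  proof -
    have "(\<Prod>j<k. x (i j)) = (\<Prod>l<m. \<Prod>j\<in>{j\<in>{..<k}. i j = l}. x (i j))"
      by (rule prod.group[symmetric]) (use i in auto)
    also have "\<dots> = (\<Prod>l<m. x l ^ cnt k m i l)"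
      by (intro prod.cong refl) (auto simp: cnt_def)
    finally show ?thesis .
  qed
  show ?thesis unfolding hom_poly_def
  proof (intro exI allI)
    fix x :: "nat \<Rightarrow> real"
    have "(\<Sum>i\<in>?E. (\<Prod>j<k. x (i j)) * coef i) = (\<Sum>i\<in>?E. (\<Prod>l<m. x l ^ cnt k m i l) * coef i)"
      using mono by (intro sum.cong) auto
    also have "\<dots> = (\<Sum>\<gamma>\<in>?G. \<Sum>i\<in>{i\<in>?E. cnt k m i = \<gamma>}. (\<Prod>l<m. x l ^ cnt k m i l) * coef i)"
      by (rule sum.group[symmetric, OF finE finG]) (use cntG in auto)
    also have "\<dots> = (\<Sum>\<gamma>\<in>?G. a \<gamma> * (\<Prod>l<m. x l ^ \<gamma> l))"
      unfolding a_def sum_distrib_right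
      by (intro sum.cong refl) (auto simp: mult.commute)
    finally show "(\<Sum>i\<in>?E. (\<Prod>j<k. x (i j)) * coef i) = (\<Sum>\<gamma>\<in>?G. a \<gamma> * (\<Prod>l<m. x l ^ \<gamma> l))" .
  qed
qed


lemma tail_small:
  fixes w :: "nat \<Rightarrow> real"
  assumes "summable w" "r > 0"
  shows "\<exists>N. (\<Sum>n. if N \<le> n then w n else 0) < r"
proof -
  obtain N where N: "\<And>n. n \<ge> N \<Longrightarrow> norm (\<Sum>i. w (i + n)) < r"
    using suminf_exist_split[OF assms(2,1)] by blast
  have "summable (\<lambda>i. w (i + N))" using assms(1) by (simp add: summable_iff_shift)
  then have "(\<lambda>i. w (i + N)) sums (\<Sum>i. w (i + N))" by (simp add: summable_sums)
  then have "(\<lambda>i. (\<lambda>n. if N \<le> n then w n else 0) (i + N)) sums (\<Sum>i. w (i + N))" by simp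
  then have "(\<lambda>n. if N \<le> n then w n else 0) sums (\<Sum>i. w (i + N))"
    by (subst (asm) sums_zero_iff_shift) auto
  then have "(\<Sum>n. if N \<le> n then w n else 0) = (\<Sum>i. w (i + N))" by (simp add: sums_iff)
  also have "\<dots> < r" using N[of N] by simp
  finally show ?thesis by blast
qed

lemma integrable_hc_bound:
  fixes f :: "real \<Rightarrow> 'a::{real_inner,complete_space}" and G :: "real \<Rightarrow> real"
  assumes approx: "\<And>a b r. b \<le> 0 \<Longrightarrow> r > 0 \<Longrightarrow> \<exists>g. (\<forall>x\<in>{a..b}. norm (f x - g x) \<le> r) \<and> g integrable_on {a..b}"
    and bound: "\<And>x. x \<le> 0 \<Longrightarrow> norm (f x) \<le> G x" and Gint: "G integrable_on {..0}"
  shows "f integrable_on {..0}"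
proof (rule integrable_via_hc)
  let ?F = "\<lambda>x. Abs_hc (f x)"
  show "?F integrable_on {..0}"
  proof (rule integrable_on_all_intervals_integrable_bound[OF _ _ Gint])
    fix a b :: real
    have I: "?F integrable_on cbox a (min b 0)"
    proof (rule integrable_uniform_limit)
      fix r :: real assume r: "r > 0"
      obtain g where g: "\<forall>x\<in>{a..min b 0}. norm (f x - g x) \<le> r" "g integrable_on {a..min b 0}"
        using approx[of "min b 0" r a] r by auto
      show "\<exists>g. (\<forall>x\<in>cbox a (min b 0). norm (?F x - g x) \<le> r) \<and> g integrable_on cbox a (min b 0)"
      proof (intro exI conjI ballI)
        fix x assume "x \<in> cbox a (min b 0)"
        then have "norm (f x - g x) \<le> r" using g(1) by auto
        moreover have "?F x - Abs_hc (g x) = Abs_hc (f x - g x)"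
          using linear_diff[OF bounded_linear.linear[OF bl_Abs_hc]] by metis
        ultimately show "norm (?F x - Abs_hc (g x)) \<le> r" by (simp add: norm_Abs_hc)
      next
        show "(\<lambda>x. Abs_hc (g x)) integrable_on cbox a (min b 0)"
          using integrable_to_hc[OF g(2)] by simp
      qed
    qed
    have eq: "{..0} \<inter> cbox a b = cbox a (min b (0::real))" by auto
    have "?F integrable_on ({..0} \<inter> cbox a b)" unfolding eq by (rule I)
    then show "(\<lambda>x. if x \<in> {..0} then ?F x else 0) integrable_on cbox a b"
      by (simp only: integrable_restrict_Int)
  next
    fix x :: real assume "x \<in> {..0}"
    then show "norm (?F x) \<le> G x" using bound by (simp add: norm_Abs_hc)
  qed
qed

locale setting =
  fixes e :: "nat \<Rightarrow> 'a::{real_inner,complete_space}" and \<beta> :: "nat \<Rightarrow> real" and m k :: nat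
    and \<alpha> c \<sigma> \<eta>c \<eta>s :: real and Fk :: "(nat \<Rightarrow> 'a) \<Rightarrow> 'a" and M :: "'o measure"
    and W :: "real \<Rightarrow> 'o \<Rightarrow> real"
  assumes basis: "hilbert_basis e"
    and beta_mono: "\<And>n. \<beta> (Suc n) \<le> \<beta> n"
    and m_pos: "1 \<le> m" and k_ge: "2 \<le> k" and alpha: "0 \<le> \<alpha>" "\<alpha> < 1" and c_shift: "\<beta> 0 < c"
    and sigma_pos: "0 < \<sigma>" and Fk_cont: "cont_klinear c \<alpha> \<beta> e k Fk"
    and L1: "0 > 2 * real k * \<eta>c" and L2: "2 * real k * \<eta>c > \<eta>s"
    and L3: "\<And>i. i < m \<Longrightarrow> \<eta>c \<le> \<beta> i" and L4: "\<And>n. m \<le> n \<Longrightarrow> \<beta> n \<le> \<eta>s"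
    and W_meas: "\<And>t. W t \<in> borel_measurable M"
    and W_cont: "\<And>\<omega>. \<omega> \<in> space M \<Longrightarrow> continuous_on UNIV (\<lambda>t. W t \<omega>)"
    and W_sublin_bot: "\<And>\<omega>. \<omega> \<in> space M \<Longrightarrow> ((\<lambda>t. W t \<omega> / t) \<longlongrightarrow> 0) at_bot"
begin

definition "EE = {..<k} \<rightarrow>\<^sub>E {..<m}"
definition "bb = \<sigma> * (real k - 1)"
definition "d0 = real k * \<eta>c - \<eta>s"
definition "vv i = Fk (\<lambda>j. e (i j))"
definition "coef \<xi> n i = (\<Prod>j<k. inner \<xi> (e (i j))) * inner (vv i) (e n)"
definition "aa n i = (\<Sum>j<k. \<beta> (i j)) - \<beta> n"
definition "DD \<xi> \<omega> n s = (if m \<le> n then \<Sum>i\<in>EE. coef \<xi> n i * exp (aa n i * s + bb * W s \<omega>) else 0)"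

lemma finEE: "finite EE" by (simp add: EE_def finite_PiE)

lemma bb_pos: "bb > 0"
  using sigma_pos k_ge by (simp add: bb_def)

lemma eta_c_neg: "\<eta>c < 0"
  using L1 k_ge by (simp add: mult_less_0_iff)

lemma d0_pos: "d0 > 0"
proof -
  have "real k * \<eta>c < 0"
    using eta_c_neg k_ge by (simp add: mult_pos_neg)
  then show ?thesis using L2 by (simp add: d0_def)
qed

lemma beta_le0: "\<beta> n \<le> \<beta> 0"
  by (induction n) (use beta_mono order_trans in auto)

lemma aa_ge: assumes "i \<in> EE" "m \<le> n" shows "aa n i \<ge> real k * \<eta>c - \<beta> n" "aa n i \<ge> d0"
proof -
  have "(\<Sum>j<k. \<eta>c) \<le> (\<Sum>j<k. \<beta> (i j))"
    by (rule sum_mono) (use assms(1) L3 in \<open>auto simp: EE_def PiE_iff\<close>)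
  then show "aa n i \<ge> real k * \<eta>c - \<beta> n" by (simp add: aa_def)
  then show "aa n i \<ge> d0" using L4[OF assms(2)] by (simp add: d0_def)
qed

lemma W_bound:
  assumes "\<omega> \<in> space M"
  shows "\<exists>C\<ge>0. \<forall>s\<le>0. bb * W s \<omega> \<le> C + d0 / 2 * (- s)"
proof -
  have eps: "d0 / (2 * bb) > 0" using d0_pos bb_pos by simp
  obtain C' where C': "C' \<ge> 0" "\<And>s. s \<le> 0 \<Longrightarrow> \<bar>W s \<omega>\<bar> \<le> C' + d0 / (2 * bb) * (- s)"
    using sublin_bound[OF W_cont[OF assms] W_sublin_bot[OF assms] eps] by blast
  show ?thesis
  proof (intro exI[of _ "bb * C'"] conjI allI impI)
    show "bb * C' \<ge> 0" using C' bb_pos by simp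
    fix s :: real assume s: "s \<le> 0"
    have "bb * W s \<omega> \<le> bb * \<bar>W s \<omega>\<bar>" using bb_pos by simp
    also have "\<dots> \<le> bb * (C' + d0 / (2 * bb) * (- s))"
      by (rule mult_left_mono[OF C'(2)[OF s]]) (use bb_pos in simp)
    also have "\<dots> = bb * C' + d0 / 2 * (- s)" using bb_pos by (simp add: field_simps)
    finally show "bb * W s \<omega> \<le> bb * C' + d0 / 2 * (- s)" .
  qed
qed

lemma expo_bound:
  assumes HC: "\<And>s. s \<le> 0 \<Longrightarrow> bb * W s \<omega> \<le> C + d0 / 2 * (- s)"
    and i: "i \<in> EE" and n: "m \<le> n" and s: "s \<le> 0"
  shows "exp (aa n i * s + bb * W s \<omega>) \<le> exp C * exp (aa n i / 2 * s)"
    "exp (aa n i * s + bb * W s \<omega>) \<le> exp C * exp (d0 / 2 * s)"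
proof -
  have a: "aa n i \<ge> d0" by (rule aa_ge(2)[OF i n])
  have h1: "(aa n i / 2 - d0 / 2) * s \<le> 0"
    using a s by (simp add: mult_nonneg_nonpos)
  have "aa n i * s + bb * W s \<omega> \<le> C + aa n i / 2 * s"
    using HC[OF s] h1 by (simp add: algebra_simps)
  then show "exp (aa n i * s + bb * W s \<omega>) \<le> exp C * exp (aa n i / 2 * s)"
    by (simp add: exp_add[symmetric])
  have h2: "aa n i / 2 * s \<le> d0 / 2 * s" using a s by (simp add: mult_right_mono_neg)
  then show "exp (aa n i * s + bb * W s \<omega>) \<le> exp C * exp (d0 / 2 * s)"
    using \<open>aa n i * s + bb * W s \<omega> \<le> C + aa n i / 2 * s\<close> by (simp add: exp_add[symmetric])
qed

lemma expo_cont: "\<omega> \<in> space M \<Longrightarrow> continuous_on UNIV (\<lambda>s. exp (aa n i * s + bb * W s \<omega>))"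
  using W_cont by (intro continuous_intros) auto

lemma M_coef_eq: "M_coef k \<sigma> \<beta> W n i \<omega> = integral {..0} (\<lambda>s. exp (aa n i * s + bb * W s \<omega>))"
  by (simp add: M_coef_def aa_def bb_def)

lemma M_facts:
  assumes \<omega>: "\<omega> \<in> space M" and HC: "\<And>s. s \<le> 0 \<Longrightarrow> bb * W s \<omega> \<le> C + d0 / 2 * (- s)"
    and i: "i \<in> EE" and n: "m \<le> n"
  shows "(\<lambda>s. exp (aa n i * s + bb * W s \<omega>)) integrable_on {..0}"
    "\<bar>M_coef k \<sigma> \<beta> W n i \<omega>\<bar> \<le> exp C / (aa n i / 2)"
    "set_integrable lborel {..0} (\<lambda>s. exp (aa n i * s + bb * W s \<omega>))"
proof -
  have q: "aa n i / 2 > 0" using aa_ge(2)[OF i n] d0_pos by simp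
  have b: "\<And>s. s \<le> 0 \<Longrightarrow> \<bar>exp (aa n i * s + bb * W s \<omega>)\<bar> \<le> exp C * exp (aa n i / 2 * s)"
    using expo_bound(1)[OF HC i n] by simp
  note D = dominated_exp_integrable[OF expo_cont[OF \<omega>] q b]
  show "(\<lambda>s. exp (aa n i * s + bb * W s \<omega>)) integrable_on {..0}" using D(2) by simp
  show "\<bar>M_coef k \<sigma> \<beta> W n i \<omega>\<bar> \<le> exp C / (aa n i / 2)" unfolding M_coef_eq using D(3) by simp
  show "set_integrable lborel {..0} (\<lambda>s. exp (aa n i * s + bb * W s \<omega>))" using D(4) by simp
qed

end


context setting
begin

lemma Fk_sg:
  assumes "\<xi> \<in> Hc e m"
  shows "Fk (\<lambda>j. sg \<beta> e s \<xi>) = (\<Sum>i\<in>EE. (\<Prod>j<k. exp (\<beta> (i j) * s) * inner \<xi> (e (i j))) *\<^sub>R vv i)"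
proof -
  have "Fk (\<lambda>j. sg \<beta> e s \<xi>) = Fk (\<lambda>j. \<Sum>l<m. (\<lambda>j l. exp (\<beta> l * s) * inner \<xi> (e l)) j l *\<^sub>R e l)"
    using sg_Hc[OF basis assms] by simp
  also have "\<dots> = (\<Sum>i\<in>EE. (\<Prod>j<k. exp (\<beta> (i j) * s) * inner \<xi> (e (i j))) *\<^sub>R vv i)"
    unfolding klin_expand[OF Fk_cont basis] EE_def vv_def by simp
  finally show ?thesis .
qed

lemma coef_exp_eq:
  "exp (bb * W s \<omega>) * (exp (- (\<beta> n * s)) * ((\<Prod>j<k. exp (\<beta> (i j) * s) * inner \<xi> (e (i j))) * inner (vv i) (e n)))
   = coef \<xi> n i * exp (aa n i * s + bb * W s \<omega>)"
proof -
  have p: "(\<Prod>j<k. exp (\<beta> (i j) * s) * inner \<xi> (e (i j))) = exp ((\<Sum>j<k. \<beta> (i j)) * s) * (\<Prod>j<k. inner \<xi> (e (i j)))"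
    by (simp add: prod.distrib exp_sum sum_distrib_right)
  have x: "exp (bb * W s \<omega>) * exp (- (\<beta> n * s)) * exp ((\<Sum>j<k. \<beta> (i j)) * s) = exp (aa n i * s + bb * W s \<omega>)"
    by (simp add: aa_def exp_add[symmetric] algebra_simps)
  show ?thesis unfolding p coef_def using x by (simp add: mult.assoc mult.left_commute)
qed

lemma integrand_comp:
  assumes \<xi>: "\<xi> \<in> Hc e m" and s: "s \<le> 0"
  shows "inner (exp (bb * W s \<omega>) *\<^sub>R sg \<beta> e (- s) (Ps e m (Fk (\<lambda>j. sg \<beta> e s \<xi>)))) (e n) = DD \<xi> \<omega> n s"
proof -
  have "inner (exp (bb * W s \<omega>) *\<^sub>R sg \<beta> e (- s) (Ps e m (Fk (\<lambda>j. sg \<beta> e s \<xi>)))) (e n)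
      = exp (bb * W s \<omega>) * (exp (- (\<beta> n * s)) * (if m \<le> n then inner (Fk (\<lambda>j. sg \<beta> e s \<xi>)) (e n) else 0))"
    using hb_sg_comp_nonneg[of e \<beta> "- s", OF basis beta_le0] s hb_Ps_comp[OF basis] by simp
  also have "\<dots> = DD \<xi> \<omega> n s"
    unfolding DD_def Fk_sg[OF \<xi>]
    by (simp add: inner_sum_left sum_distrib_left coef_exp_eq)
  finally show ?thesis .
qed

end


context setting
begin

definition "ff \<xi> \<omega> s = exp (bb * W s \<omega>) *\<^sub>R sg \<beta> e (- s) (Ps e m (Fk (\<lambda>j. sg \<beta> e s \<xi>)))"
definition "ww \<xi> n = real (card EE) * (\<Sum>i\<in>EE. (coef \<xi> n i)\<^sup>2)"

lemma ww_nonneg: "ww \<xi> n \<ge> 0"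
  by (simp add: ww_def sum_nonneg)

lemma ww_summable: "summable (ww \<xi>)"
proof -
  have "summable (\<lambda>n. (\<Sum>i\<in>EE. (coef \<xi> n i)\<^sup>2))"
  proof (rule summable_sum)
    fix i assume "i \<in> EE"
    have "summable (\<lambda>n. (\<Prod>j<k. inner \<xi> (e (i j)))\<^sup>2 * (inner (vv i) (e n))\<^sup>2)"
      by (rule summable_mult[OF hb_norm2(2)[OF basis]])
    then show "summable (\<lambda>n. (coef \<xi> n i)\<^sup>2)"
      by (simp add: coef_def power_mult_distrib)
  qed
  then show ?thesis unfolding ww_def by (rule summable_mult)
qed

lemma ff_comp: "\<xi> \<in> Hc e m \<Longrightarrow> s \<le> 0 \<Longrightarrow> inner (ff \<xi> \<omega> s) (e n) = DD \<xi> \<omega> n s"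
  unfolding ff_def by (rule integrand_comp)

lemma DD_sq_bound:
  assumes HC: "\<And>s. s \<le> 0 \<Longrightarrow> bb * W s \<omega> \<le> C + d0 / 2 * (- s)" and s: "s \<le> 0"
  shows "(DD \<xi> \<omega> n s)\<^sup>2 \<le> (exp C * exp (d0 / 2 * s))\<^sup>2 * ww \<xi> n"
proof (cases "m \<le> n")
  case True
  let ?G = "exp C * exp (d0 / 2 * s)"
  let ?X = "\<lambda>i. exp (aa n i * s + bb * W s \<omega>)"
  have "(DD \<xi> \<omega> n s)\<^sup>2 = (\<Sum>i\<in>EE. coef \<xi> n i * ?X i)\<^sup>2" using True by (simp add: DD_def)
  also have "\<dots> \<le> real (card EE) * (\<Sum>i\<in>EE. (coef \<xi> n i * ?X i)\<^sup>2)"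
    by (rule sum_sq_le_card[OF finEE])
  also have "\<dots> \<le> real (card EE) * (\<Sum>i\<in>EE. (coef \<xi> n i)\<^sup>2 * ?G\<^sup>2)"
  proof (intro mult_left_mono sum_mono)
    fix i assume i: "i \<in> EE"
    have "?X i \<le> ?G" by (rule expo_bound(2)[OF HC i True s])
    then have "(?X i)\<^sup>2 \<le> ?G\<^sup>2" by (intro power_mono) auto
    then show "(coef \<xi> n i * ?X i)\<^sup>2 \<le> (coef \<xi> n i)\<^sup>2 * ?G\<^sup>2"
      by (simp add: power_mult_distrib mult_left_mono)
  qed simp
  also have "\<dots> = ?G\<^sup>2 * ww \<xi> n"
    by (simp add: ww_def sum_distrib_right[symmetric] mult_ac)
  finally show ?thesis .
next
  case False
  then show ?thesis by (simp add: DD_def ww_nonneg)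
qed

lemma DD_summable:
  assumes "\<xi> \<in> Hc e m" "s \<le> 0"
  shows "summable (\<lambda>n. (DD \<xi> \<omega> n s)\<^sup>2)" "(norm (ff \<xi> \<omega> s))\<^sup>2 = (\<Sum>n. (DD \<xi> \<omega> n s)\<^sup>2)"
  using hb_norm2[OF basis, of "ff \<xi> \<omega> s"] ff_comp[OF assms] by simp_all

lemma ff_norm_bound:
  assumes \<xi>: "\<xi> \<in> Hc e m" and HC: "\<And>s. s \<le> 0 \<Longrightarrow> bb * W s \<omega> \<le> C + d0 / 2 * (- s)" and s: "s \<le> 0"
  shows "norm (ff \<xi> \<omega> s) \<le> (exp C * sqrt (suminf (ww \<xi>))) * exp (d0 / 2 * s)"
proof -
  let ?G = "exp C * exp (d0 / 2 * s)"
  have "(norm (ff \<xi> \<omega> s))\<^sup>2 = (\<Sum>n. (DD \<xi> \<omega> n s)\<^sup>2)" by (rule DD_summable(2)[OF \<xi> s])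
  also have "\<dots> \<le> (\<Sum>n. ?G\<^sup>2 * ww \<xi> n)"
    by (rule suminf_le[OF _ DD_summable(1)[OF \<xi> s] summable_mult[OF ww_summable]])
       (rule DD_sq_bound[OF HC s])
  also have "\<dots> = ?G\<^sup>2 * suminf (ww \<xi>)"
    by (rule suminf_mult[OF ww_summable])
  also have "\<dots> = ((exp C * sqrt (suminf (ww \<xi>))) * exp (d0 / 2 * s))\<^sup>2"
    using suminf_nonneg[OF ww_summable ww_nonneg] by (simp add: power_mult_distrib)
  finally show ?thesis
    by (rule power2_le_imp_le) (use suminf_nonneg[OF ww_summable ww_nonneg] in simp)
qed

lemma DD_cont: "\<omega> \<in> space M \<Longrightarrow> continuous_on UNIV (DD \<xi> \<omega> n)"
proof (cases "m \<le> n")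
  case True
  assume \<omega>: "\<omega> \<in> space M"
  have "continuous_on UNIV (\<lambda>s. \<Sum>i\<in>EE. coef \<xi> n i * exp (aa n i * s + bb * W s \<omega>))"
    using W_cont[OF \<omega>] by (intro continuous_intros) auto
  then show ?thesis using True by (simp add: DD_def[abs_def])
next
  case False
  then show ?thesis by (simp add: DD_def[abs_def])
qed

lemma ff_approx:
  assumes \<xi>: "\<xi> \<in> Hc e m" and \<omega>: "\<omega> \<in> space M"
    and HC: "\<And>s. s \<le> 0 \<Longrightarrow> bb * W s \<omega> \<le> C + d0 / 2 * (- s)"
    and b: "b \<le> 0" and r: "r > 0"
  shows "\<exists>g. (\<forall>x\<in>{a..b}. norm (ff \<xi> \<omega> x - g x) \<le> r) \<and> g integrable_on {a..b}"
proof -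
  have "r\<^sup>2 / (exp C)\<^sup>2 > 0" using r by simp
  then obtain N where N: "(\<Sum>n. if N \<le> n then ww \<xi> n else 0) < r\<^sup>2 / (exp C)\<^sup>2"
    using tail_small[OF ww_summable] by blast
  define g where "g s = (\<Sum>n<N. DD \<xi> \<omega> n s *\<^sub>R e n)" for s
  show ?thesis
  proof (intro exI conjI ballI)
    show "g integrable_on {a..b}"
      unfolding g_def
      by (intro integrable_sum integrable_on_scaleR_left integrable_continuous_real
            continuous_on_subset[OF DD_cont[OF \<omega>]]) auto
    fix x assume x: "x \<in> {a..b}"
    then have x0: "x \<le> 0" using b by auto
    have gc: "inner (g x) (e n) = (if n < N then DD \<xi> \<omega> n x else 0)" for n
      unfolding g_def by (simp add: inner_sum_left hb_orth[OF basis] if_distrib sum.delta' cong: if_cong)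
    have comp: "inner (ff \<xi> \<omega> x - g x) (e n) = (if N \<le> n then DD \<xi> \<omega> n x else 0)" for n
      using ff_comp[OF \<xi> x0] gc by (simp add: inner_diff_left)
    have sq: "(if N \<le> n then DD \<xi> \<omega> n x else 0)\<^sup>2 \<le> (exp C)\<^sup>2 * (if N \<le> n then ww \<xi> n else 0)" for n
    proof (cases "N \<le> n")
      case True
      have "exp (d0 / 2 * x) \<le> 1" using x0 d0_pos by (simp add: mult_nonneg_nonpos)
      then have "(exp C * exp (d0 / 2 * x))\<^sup>2 \<le> (exp C)\<^sup>2"
        by (simp add: power_mult_distrib power_le_one mult_left_le)
      then have "(exp C * exp (d0 / 2 * x))\<^sup>2 * ww \<xi> n \<le> (exp C)\<^sup>2 * ww \<xi> n"
        by (rule mult_right_mono[OF _ ww_nonneg])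
      then show ?thesis using DD_sq_bound[OF HC x0, of \<xi> n] True by simp
    qed simp
    have sumw: "summable (\<lambda>n. if N \<le> n then ww \<xi> n else 0)"
      by (rule summable_comparison_test'[OF ww_summable, where N=0]) (auto simp: ww_nonneg)
    have "(norm (ff \<xi> \<omega> x - g x))\<^sup>2 = (\<Sum>n. (if N \<le> n then DD \<xi> \<omega> n x else 0)\<^sup>2)"
      using hb_norm2(1)[OF basis, of "ff \<xi> \<omega> x - g x"] comp by simp
    also have "\<dots> \<le> (\<Sum>n. (exp C)\<^sup>2 * (if N \<le> n then ww \<xi> n else 0))"
      by (rule suminf_le[OF sq]) (use hb_norm2(2)[OF basis, of "ff \<xi> \<omega> x - g x"] comp summable_mult[OF sumw] in auto)
    also have "\<dots> = (exp C)\<^sup>2 * (\<Sum>n. if N \<le> n then ww \<xi> n else 0)"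
      by (rule suminf_mult[OF sumw])
    also have "\<dots> \<le> (exp C)\<^sup>2 * (r\<^sup>2 / (exp C)\<^sup>2)"
      by (rule mult_left_mono) (use N in auto)
    also have "\<dots> = r\<^sup>2" by simp
    finally show "norm (ff \<xi> \<omega> x - g x) \<le> r"
      by (rule power2_le_imp_le) (use r in simp)
  qed
qed

lemma ff_integrable:
  assumes \<xi>: "\<xi> \<in> Hc e m" and \<omega>: "\<omega> \<in> space M"
  shows "ff \<xi> \<omega> integrable_on {..0}"
proof -
  obtain C where C: "C \<ge> 0" "\<And>s. s \<le> 0 \<Longrightarrow> bb * W s \<omega> \<le> C + d0 / 2 * (- s)"
    using W_bound[OF \<omega>] by blast
  have d: "d0 / 2 > 0" using d0_pos by simp
  have Gi: "(\<lambda>s. (exp C * sqrt (suminf (ww \<xi>))) * exp (d0 / 2 * s)) integrable_on {..0}"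
    using integrable_cmul[OF exp_has_integral_neg(2)[OF d, THEN has_integral_integrable],
        of "exp C * sqrt (suminf (ww \<xi>))"] by simp
  show ?thesis
    by (rule integrable_hc_bound[OF ff_approx[OF \<xi> \<omega> C(2)] ff_norm_bound[OF \<xi> C(2)] Gi])
qed

lemma hhat_comp:
  assumes \<xi>: "\<xi> \<in> Hc e m" and \<omega>: "\<omega> \<in> space M"
  shows "inner (hhat_app k \<sigma> \<beta> e m Fk W \<xi> \<omega>) (e n) =
    (if m \<le> n then \<Sum>i\<in>EE. coef \<xi> n i * M_coef k \<sigma> \<beta> W n i \<omega> else 0)"
proof -
  obtain C where C: "C \<ge> 0" "\<And>s. s \<le> 0 \<Longrightarrow> bb * W s \<omega> \<le> C + d0 / 2 * (- s)"
    using W_bound[OF \<omega>] by blast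
  have "hhat_app k \<sigma> \<beta> e m Fk W \<xi> \<omega> = integral {..0} (ff \<xi> \<omega>)"
    by (simp add: hhat_app_def ff_def[abs_def] bb_def)
  then have "inner (hhat_app k \<sigma> \<beta> e m Fk W \<xi> \<omega>) (e n) = integral {..0} (\<lambda>s. inner (ff \<xi> \<omega> s) (e n))"
    using integral_linear[OF ff_integrable[OF \<xi> \<omega>] bounded_linear_inner_left[of "e n"]]
    by (simp add: o_def)
  also have "\<dots> = integral {..0} (DD \<xi> \<omega> n)"
    by (rule integral_cong) (simp add: ff_comp[OF \<xi>])
  also have "\<dots> = (if m \<le> n then \<Sum>i\<in>EE. coef \<xi> n i * M_coef k \<sigma> \<beta> W n i \<omega> else 0)"
  proof (cases "m \<le> n")
    case True
    have "integral {..0} (DD \<xi> \<omega> n) =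
        integral {..0} (\<lambda>s. \<Sum>i\<in>EE. coef \<xi> n i * exp (aa n i * s + bb * W s \<omega>))"
      using True by (simp add: DD_def[abs_def])
    also have "\<dots> = (\<Sum>i\<in>EE. integral {..0} (\<lambda>s. coef \<xi> n i * exp (aa n i * s + bb * W s \<omega>)))"
    proof (rule integral_sum[OF finEE])
      fix i assume i: "i \<in> EE"
      show "(\<lambda>s. coef \<xi> n i * exp (aa n i * s + bb * W s \<omega>)) integrable_on {..0}"
        using integrable_cmul[OF M_facts(1)[OF \<omega> C(2) i True], of "coef \<xi> n i"] by simp
    qed
    also have "\<dots> = (\<Sum>i\<in>EE. coef \<xi> n i * M_coef k \<sigma> \<beta> W n i \<omega>)"
      by (simp add: M_coef_eq)
    finally show ?thesis using True by simp
  next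
    case False
    then show ?thesis by (simp add: DD_def[abs_def])
  qed
  finally show ?thesis .
qed

end


lemma cont_fst: "continuous_on UNIV (\<lambda>p::real\<times>real. fst p)"
  by (rule continuous_on_fst[OF continuous_on_id])
lemma cont_snd: "continuous_on UNIV (\<lambda>p::real\<times>real. snd p)"
  by (rule continuous_on_snd[OF continuous_on_id])

context setting
begin

lemma hhat_Halpha:
  assumes \<xi>: "\<xi> \<in> Hc e m" and \<omega>: "\<omega> \<in> space M"
  shows "in_Halpha c \<alpha> \<beta> e (hhat_app k \<sigma> \<beta> e m Fk W \<xi> \<omega>)"
proof -
  obtain C where C: "C \<ge> 0" "\<And>s. s \<le> 0 \<Longrightarrow> bb * W s \<omega> \<le> C + d0 / 2 * (- s)"
    using W_bound[OF \<omega>] by blast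
  define D where "D = c - real k * \<eta>c"
  define K0 where "K0 = ((D + d0) / d0)\<^sup>2 + 1 / d0\<^sup>2"
  have D0: "D \<ge> 0"
  proof -
    have "\<eta>c \<le> \<beta> 0" using L3[of 0] m_pos by simp
    moreover have "real k * \<eta>c \<le> \<eta>c"
    proof -
      have "(real k - 1) * \<eta>c \<le> 0" using k_ge eta_c_neg by (simp add: mult_nonneg_nonpos)
      then show ?thesis by (simp add: algebra_simps)
    qed
    ultimately show ?thesis using c_shift by (simp add: D_def)
  qed
  let ?H = "hhat_app k \<sigma> \<beta> e m Fk W \<xi> \<omega>"
  let ?t = "\<lambda>n. (c - \<beta> n) powr (2 * \<alpha>) * (inner ?H (e n))\<^sup>2"
  have bound: "norm (?t n) \<le> K0 * (2 * exp C)\<^sup>2 * ww \<xi> n" for n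
  proof (cases "m \<le> n")
    case False
    then show ?thesis using hhat_comp[OF \<xi> \<omega>, of n] ww_nonneg[of \<xi> n]
      by (simp add: K0_def)
  next
    case True
    define L where "L = real k * \<eta>c - \<beta> n"
    have L: "L \<ge> d0" using L4[OF True] by (simp add: L_def d0_def)
    have Lpos: "L > 0" using L d0_pos by simp
    have Mb: "(M_coef k \<sigma> \<beta> W n i \<omega>)\<^sup>2 \<le> (2 * exp C)\<^sup>2 / L\<^sup>2" if i: "i \<in> EE" for i
    proof -
      have a: "aa n i \<ge> L" using aa_ge(1)[OF i True] by (simp add: L_def)
      have "\<bar>M_coef k \<sigma> \<beta> W n i \<omega>\<bar> \<le> exp C / (aa n i / 2)" by (rule M_facts(2)[OF \<omega> C(2) i True])
      also have "\<dots> = 2 * exp C / aa n i" by simp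
      also have "\<dots> \<le> 2 * exp C / L"
        by (rule divide_left_mono) (use a Lpos in auto)
      finally have "\<bar>M_coef k \<sigma> \<beta> W n i \<omega>\<bar> \<le> 2 * exp C / L" .
      then have "\<bar>M_coef k \<sigma> \<beta> W n i \<omega>\<bar>\<^sup>2 \<le> (2 * exp C / L)\<^sup>2" by (rule power_mono) simp
      then show ?thesis by (simp add: power_divide)
    qed
    have w: "(c - \<beta> n) powr (2 * \<alpha>) \<le> K0 * L\<^sup>2"
    proof -
      have "(c - \<beta> n) - D \<ge> d0" using L by (simp add: D_def L_def)
      from powr_ratio_bound[OF D0 d0_pos this alpha]
      show ?thesis by (simp add: K0_def D_def L_def)
    qed
    have "(inner ?H (e n))\<^sup>2 = (\<Sum>i\<in>EE. coef \<xi> n i * M_coef k \<sigma> \<beta> W n i \<omega>)\<^sup>2"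
      using hhat_comp[OF \<xi> \<omega>, of n] True by simp
    also have "\<dots> \<le> real (card EE) * (\<Sum>i\<in>EE. (coef \<xi> n i * M_coef k \<sigma> \<beta> W n i \<omega>)\<^sup>2)"
      by (rule sum_sq_le_card[OF finEE])
    also have "\<dots> \<le> real (card EE) * (\<Sum>i\<in>EE. (coef \<xi> n i)\<^sup>2 * ((2 * exp C)\<^sup>2 / L\<^sup>2))"
    proof (intro mult_left_mono sum_mono)
      fix i assume i: "i \<in> EE"
      show "(coef \<xi> n i * M_coef k \<sigma> \<beta> W n i \<omega>)\<^sup>2 \<le> (coef \<xi> n i)\<^sup>2 * ((2 * exp C)\<^sup>2 / L\<^sup>2)"
        using mult_left_mono[OF Mb[OF i], of "(coef \<xi> n i)\<^sup>2"] by (simp add: power_mult_distrib)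
    qed simp
    also have "\<dots> = real (card EE) * ((\<Sum>i\<in>EE. (coef \<xi> n i)\<^sup>2) * ((2 * exp C)\<^sup>2 / L\<^sup>2))"
      by (simp only: sum_distrib_right)
    also have "\<dots> = (2 * exp C)\<^sup>2 / L\<^sup>2 * ww \<xi> n"
      by (simp only: ww_def mult_ac)
    finally have sq: "(inner ?H (e n))\<^sup>2 \<le> (2 * exp C)\<^sup>2 / L\<^sup>2 * ww \<xi> n" .
    have "?t n \<le> (K0 * L\<^sup>2) * ((2 * exp C)\<^sup>2 / L\<^sup>2 * ww \<xi> n)"
      by (rule mult_mono[OF w sq]) (auto simp: ww_nonneg K0_def)
    also have "\<dots> = K0 * (2 * exp C)\<^sup>2 * ww \<xi> n" using Lpos by (simp add: field_simps)
    finally show ?thesis by simp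
  qed
  show ?thesis unfolding in_Halpha_def
    by (rule summable_comparison_test'[OF summable_mult[OF ww_summable], where N=0]) (use bound in auto)
qed

lemma z_meas: "(\<lambda>\<omega>. z_sigma \<sigma> W \<omega>) \<in> borel_measurable M"
proof -
  have "(\<lambda>\<omega>. integral {..0} (\<lambda>\<tau>. (\<lambda>s x. exp s * x) \<tau> (W \<tau> \<omega>))) \<in> borel_measurable M"
  proof (rule measurable_param_integral[OF W_meas W_cont])
    show "continuous_on UNIV (\<lambda>p::real\<times>real. exp (fst p) * snd p)" by (intro continuous_intros cont_fst cont_snd)
    fix \<omega> assume \<omega>: "\<omega> \<in> space M"
    obtain C1 where C1: "C1 \<ge> 0" "\<And>s. s \<le> 0 \<Longrightarrow> \<bar>W s \<omega>\<bar> \<le> C1 + 1 * (- s)"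
      using sublin_bound[OF W_cont[OF \<omega>] W_sublin_bot[OF \<omega>], of 1] by auto
    have b: "\<bar>exp \<tau> * W \<tau> \<omega>\<bar> \<le> (C1 + 2) * exp (1 / 2 * \<tau>)" if t: "\<tau> \<le> 0" for \<tau>
    proof -
      have e1: "exp \<tau> \<le> exp (1 / 2 * \<tau>)" using t by simp
      have "- \<tau> / 2 \<le> exp (- \<tau> / 2)" using exp_ge_add_one_self[of "- \<tau> / 2"] by simp
      then have "(- \<tau>) * exp \<tau> \<le> 2 * exp (- \<tau> / 2) * exp \<tau>"
        by (intro mult_right_mono) auto
      also have "\<dots> = 2 * exp (1 / 2 * \<tau>)" by (simp add: mult_exp_exp)
      finally have e2: "(- \<tau>) * exp \<tau> \<le> 2 * exp (1 / 2 * \<tau>)" .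
      have "\<bar>exp \<tau> * W \<tau> \<omega>\<bar> = exp \<tau> * \<bar>W \<tau> \<omega>\<bar>" by (simp add: abs_mult)
      also have "\<dots> \<le> exp \<tau> * (C1 + (- \<tau>))" using C1(2)[OF t] by (simp add: mult_left_mono)
      also have "\<dots> = C1 * exp \<tau> + (- \<tau>) * exp \<tau>" by (simp add: algebra_simps)
      also have "\<dots> \<le> C1 * exp (1 / 2 * \<tau>) + 2 * exp (1 / 2 * \<tau>)"
        by (intro add_mono mult_left_mono e1 e2 C1(1))
      also have "\<dots> = (C1 + 2) * exp (1 / 2 * \<tau>)" by (simp add: algebra_simps)
      finally show ?thesis .
    qed
    have cont: "continuous_on UNIV (\<lambda>\<tau>. exp \<tau> * W \<tau> \<omega>)"
      using W_cont[OF \<omega>] by (intro continuous_intros cont_fst cont_snd) auto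
    show "set_integrable lborel {..0} (\<lambda>s. (\<lambda>s x. exp s * x) s (W s \<omega>))"
      using dominated_exp_integrable(4)[OF cont _ b] by simp
  qed
  then show ?thesis unfolding z_sigma_def by simp
qed

lemma M_meas:
  assumes i: "i \<in> EE" and n: "m \<le> n"
  shows "(\<lambda>\<omega>. M_coef k \<sigma> \<beta> W n i \<omega>) \<in> borel_measurable M"
proof -
  have "(\<lambda>\<omega>. integral {..0} (\<lambda>s. (\<lambda>s x. exp (aa n i * s + bb * x)) s (W s \<omega>))) \<in> borel_measurable M"
  proof (rule measurable_param_integral[OF W_meas W_cont])
    show "continuous_on UNIV (\<lambda>p::real\<times>real. exp (aa n i * fst p + bb * snd p))" by (intro continuous_intros cont_fst cont_snd)
    fix \<omega> assume \<omega>: "\<omega> \<in> space M"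
    obtain C where C: "C \<ge> 0" "\<And>s. s \<le> 0 \<Longrightarrow> bb * W s \<omega> \<le> C + d0 / 2 * (- s)"
      using W_bound[OF \<omega>] by blast
    show "set_integrable lborel {..0} (\<lambda>s. (\<lambda>s x. exp (aa n i * s + bb * x)) s (W s \<omega>))"
      using M_facts(3)[OF \<omega> C(2) i n] by simp
  qed
  then show ?thesis by (simp add: M_coef_eq)
qed

end


context setting
begin

lemma sums_hhat:
  assumes \<xi>: "\<xi> \<in> Hc e m" and \<omega>: "\<omega> \<in> space M"
  shows "(\<lambda>n. if m \<le> n then
              (\<Sum>i\<in>{..<k} \<rightarrow>\<^sub>E {..<m}.
                  (\<Prod>j<k. inner \<xi> (e (i j))) * inner (Fk (\<lambda>j. e (i j))) (e n)
                  * M_coef k \<sigma> \<beta> W n i \<omega>) *\<^sub>R e n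
             else 0) sums hhat_app k \<sigma> \<beta> e m Fk W \<xi> \<omega>"
proof -
  have "(\<lambda>n. inner (hhat_app k \<sigma> \<beta> e m Fk W \<xi> \<omega>) (e n) *\<^sub>R e n) sums hhat_app k \<sigma> \<beta> e m Fk W \<xi> \<omega>"
    by (rule hb_expand[OF basis])
  moreover have "(\<lambda>n. inner (hhat_app k \<sigma> \<beta> e m Fk W \<xi> \<omega>) (e n) *\<^sub>R e n) =
     (\<lambda>n. if m \<le> n then
              (\<Sum>i\<in>{..<k} \<rightarrow>\<^sub>E {..<m}.
                  (\<Prod>j<k. inner \<xi> (e (i j))) * inner (Fk (\<lambda>j. e (i j))) (e n)
                  * M_coef k \<sigma> \<beta> W n i \<omega>) *\<^sub>R e n
             else 0)"
    by (rule ext) (simp add: hhat_comp[OF \<xi> \<omega>] coef_def vv_def EE_def)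
  ultimately show ?thesis by simp
qed

lemma sums_h:
  assumes \<xi>: "\<xi> \<in> Hc e m" and \<omega>: "\<omega> \<in> space M"
  shows "(\<lambda>n. if m \<le> n then
              (exp ((real k - 1) * z_sigma \<sigma> W \<omega>) *
               (\<Sum>i\<in>{..<k} \<rightarrow>\<^sub>E {..<m}.
                  (\<Prod>j<k. inner \<xi> (e (i j))) * inner (Fk (\<lambda>j. e (i j))) (e n)
                  * M_coef k \<sigma> \<beta> W n i \<omega>)) *\<^sub>R e n
             else 0) sums h_app k \<sigma> \<beta> e m Fk W \<xi> \<omega>"
proof -
  have "(\<lambda>n. exp ((real k - 1) * z_sigma \<sigma> W \<omega>) *\<^sub>R (if m \<le> n then
              (\<Sum>i\<in>{..<k} \<rightarrow>\<^sub>E {..<m}.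
                  (\<Prod>j<k. inner \<xi> (e (i j))) * inner (Fk (\<lambda>j. e (i j))) (e n)
                  * M_coef k \<sigma> \<beta> W n i \<omega>) *\<^sub>R e n
             else 0)) sums (exp ((real k - 1) * z_sigma \<sigma> W \<omega>) *\<^sub>R hhat_app k \<sigma> \<beta> e m Fk W \<xi> \<omega>)"
    by (rule bounded_linear.sums[OF bounded_linear_scaleR_right sums_hhat[OF \<xi> \<omega>]])
  then show ?thesis unfolding h_app_def by (simp add: if_distrib cong: if_cong)
qed

lemma main:
  assumes h_approx: "small_error M c \<alpha> \<beta> e m k h (h_app k \<sigma> \<beta> e m Fk W)"
    and hhat_approx: "small_error M c \<alpha> \<beta> e m k hhat (hhat_app k \<sigma> \<beta> e m Fk W)"
  shows
    "(\<forall>\<xi>\<in>Hc e m. \<forall>\<omega>\<in>space M.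
        (\<lambda>n. if m \<le> n then
              (exp ((real k - 1) * z_sigma \<sigma> W \<omega>) *
               (\<Sum>i\<in>{..<k} \<rightarrow>\<^sub>E {..<m}.
                  (\<Prod>j<k. inner \<xi> (e (i j))) * inner (Fk (\<lambda>j. e (i j))) (e n)
                  * M_coef k \<sigma> \<beta> W n i \<omega>)) *\<^sub>R e n
             else 0)
        sums h_app k \<sigma> \<beta> e m Fk W \<xi> \<omega>)
     \<and> random_hom_poly M c \<alpha> \<beta> e m k (h_app k \<sigma> \<beta> e m Fk W)
     \<and> leading_order_taylor M c \<alpha> \<beta> e m k (h_app k \<sigma> \<beta> e m Fk W) h
     \<and> (\<forall>\<xi>\<in>Hc e m. \<forall>\<omega>\<in>space M.
        (\<lambda>n. if m \<le> n then
              (\<Sum>i\<in>{..<k} \<rightarrow>\<^sub>E {..<m}.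
                  (\<Prod>j<k. inner \<xi> (e (i j))) * inner (Fk (\<lambda>j. e (i j))) (e n)
                  * M_coef k \<sigma> \<beta> W n i \<omega>) *\<^sub>R e n
             else 0)
        sums hhat_app k \<sigma> \<beta> e m Fk W \<xi> \<omega>)
     \<and> random_hom_poly M c \<alpha> \<beta> e m k (hhat_app k \<sigma> \<beta> e m Fk W)
     \<and> leading_order_taylor M c \<alpha> \<beta> e m k (hhat_app k \<sigma> \<beta> e m Fk W) hhat"

proof -
  have zm[measurable]: "(\<lambda>\<omega>. z_sigma \<sigma> W \<omega>) \<in> borel_measurable M" by (rule z_meas)
  let ?S = "\<lambda>n \<xi> \<omega>. (\<Sum>i\<in>{..<k} \<rightarrow>\<^sub>E {..<m}.
                  (\<Prod>j<k. inner \<xi> (e (i j))) * inner (Fk (\<lambda>j. e (i j))) (e n)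
                  * M_coef k \<sigma> \<beta> W n i \<omega>)"
  have Smeas: "(\<lambda>\<omega>. ?S n \<xi> \<omega>) \<in> borel_measurable M" if "m \<le> n" for n \<xi>
    by (intro borel_measurable_sum borel_measurable_times borel_measurable_const M_meas)
       (use that in \<open>auto simp: EE_def\<close>)
  have Spoly: "\<exists>P. hom_poly m k P \<and> (\<forall>\<xi>\<in>Hc e m. r * ?S n \<xi> \<omega> = P (\<lambda>i. inner \<xi> (e i)))" for n \<omega> r
  proof (intro exI conjI ballI)
    show "hom_poly m k (\<lambda>x. \<Sum>i\<in>{..<k} \<rightarrow>\<^sub>E {..<m}. (\<Prod>j<k. x (i j)) *
       (r * (inner (Fk (\<lambda>j. e (i j))) (e n) * M_coef k \<sigma> \<beta> W n i \<omega>)))"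
      by (rule hom_poly_sum)
    fix \<xi> :: 'a
    show "r * ?S n \<xi> \<omega> = (\<lambda>x. \<Sum>i\<in>{..<k} \<rightarrow>\<^sub>E {..<m}. (\<Prod>j<k. x (i j)) *
       (r * (inner (Fk (\<lambda>j. e (i j))) (e n) * M_coef k \<sigma> \<beta> W n i \<omega>))) (\<lambda>i. inner \<xi> (e i))"
      by (simp add: sum_distrib_left mult_ac)
  qed
  have RH: "random_hom_poly M c \<alpha> \<beta> e m k (hhat_app k \<sigma> \<beta> e m Fk W)"
    unfolding random_hom_poly_def
  proof (intro exI[of _ ?S] conjI ballI allI impI)
    fix \<xi> \<omega> assume \<xi>: "\<xi> \<in> Hc e m" and \<omega>: "\<omega> \<in> space M"
    show "(\<lambda>n. if m \<le> n then ?S n \<xi> \<omega> *\<^sub>R e n else 0) sums hhat_app k \<sigma> \<beta> e m Fk W \<xi> \<omega>"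
      by (rule sums_hhat[OF \<xi> \<omega>])
    show "in_Halpha c \<alpha> \<beta> e (hhat_app k \<sigma> \<beta> e m Fk W \<xi> \<omega>)" by (rule hhat_Halpha[OF \<xi> \<omega>])
  next
    fix n \<xi> assume "m \<le> n" "\<xi> \<in> Hc e m"
    then show "(\<lambda>\<omega>. ?S n \<xi> \<omega>) \<in> borel_measurable M" by (intro Smeas)
  next
    fix n \<omega> assume "m \<le> n" "\<omega> \<in> space M"
    show "\<exists>P. hom_poly m k P \<and> (\<forall>\<xi>\<in>Hc e m. ?S n \<xi> \<omega> = P (\<lambda>i. inner \<xi> (e i)))"
      using Spoly[of 1 n \<omega>] by simp
  qed
  let ?T = "\<lambda>n \<xi> \<omega>. exp ((real k - 1) * z_sigma \<sigma> W \<omega>) * ?S n \<xi> \<omega>"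
  have Rh: "random_hom_poly M c \<alpha> \<beta> e m k (h_app k \<sigma> \<beta> e m Fk W)"
    unfolding random_hom_poly_def
  proof (intro exI[of _ ?T] conjI ballI allI impI)
    fix \<xi> \<omega> assume \<xi>: "\<xi> \<in> Hc e m" and \<omega>: "\<omega> \<in> space M"
    show "(\<lambda>n. if m \<le> n then ?T n \<xi> \<omega> *\<^sub>R e n else 0) sums h_app k \<sigma> \<beta> e m Fk W \<xi> \<omega>"
      by (rule sums_h[OF \<xi> \<omega>])
    have "in_Halpha c \<alpha> \<beta> e (exp ((real k - 1) * z_sigma \<sigma> W \<omega>) *\<^sub>R hhat_app k \<sigma> \<beta> e m Fk W \<xi> \<omega> + 0 *\<^sub>R 0)"
      by (rule Halpha_lincomb[OF hhat_Halpha[OF \<xi> \<omega>] Halpha_zero])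
    then show "in_Halpha c \<alpha> \<beta> e (h_app k \<sigma> \<beta> e m Fk W \<xi> \<omega>)" by (simp add: h_app_def)
  next
    fix n \<xi> assume "m \<le> n" "\<xi> \<in> Hc e m"
    then have [measurable]: "(\<lambda>\<omega>. ?S n \<xi> \<omega>) \<in> borel_measurable M" by (intro Smeas)
    show "(\<lambda>\<omega>. ?T n \<xi> \<omega>) \<in> borel_measurable M" by measurable
  next
    fix n \<omega> assume "m \<le> n" "\<omega> \<in> space M"
    show "\<exists>P. hom_poly m k P \<and> (\<forall>\<xi>\<in>Hc e m. ?T n \<xi> \<omega> = P (\<lambda>i. inner \<xi> (e i)))"
      by (rule Spoly)
  qed
  show ?thesis
    using sums_h sums_hhat RH Rh h_approx hhat_approx
    unfolding leading_order_taylor_def by blast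
qed

end

theorem corollary6p10:
  fixes e :: "nat \<Rightarrow> 'a::{real_inner, complete_space}"
    and \<beta> :: "nat \<Rightarrow> real"
    and m k :: nat
    and \<alpha> c \<sigma> \<eta>c \<eta>s :: real
    and Fk :: "(nat \<Rightarrow> 'a) \<Rightarrow> 'a"
    and M :: "'o measure"
    and W :: "real \<Rightarrow> 'o \<Rightarrow> real"
    and h hhat :: "'a \<Rightarrow> 'o \<Rightarrow> 'a"
  assumes basis: "hilbert_basis e"
    and beta_mono: "\<And>n. \<beta> (Suc n) \<le> \<beta> n"
    and m_pos: "1 \<le> m"
    and k_ge: "2 \<le> k"
    and alpha: "0 \<le> \<alpha>" "\<alpha> < 1"
    and c_shift: "\<beta> 0 < c"
    and sigma_pos: "0 < \<sigma>"
    and Fk_cont: "cont_klinear c \<alpha> \<beta> e k Fk"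
    and Lambda_2k: "0 > 2 * real k * \<eta>c" "2 * real k * \<eta>c > \<eta>s"
        "\<And>i. i < m \<Longrightarrow> \<eta>c \<le> \<beta> i" "\<And>n. m \<le> n \<Longrightarrow> \<beta> n \<le> \<eta>s"
    and prob: "prob_space M"
    and W_meas: "\<And>t. W t \<in> borel_measurable M"
    and W_cont: "\<And>\<omega>. \<omega> \<in> space M \<Longrightarrow> continuous_on UNIV (\<lambda>t. W t \<omega>)"
    and W_zero: "\<And>\<omega>. \<omega> \<in> space M \<Longrightarrow> W 0 \<omega> = 0"
    and W_sublin_bot: "\<And>\<omega>. \<omega> \<in> space M \<Longrightarrow> ((\<lambda>t. W t \<omega> / t) \<longlongrightarrow> 0) at_bot"
    and W_sublin_top: "\<And>\<omega>. \<omega> \<in> space M \<Longrightarrow> ((\<lambda>t. W t \<omega> / t) \<longlongrightarrow> 0) at_top"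
    and h_approx: "small_error M c \<alpha> \<beta> e m k h (h_app k \<sigma> \<beta> e m Fk W)"
    and hhat_approx: "small_error M c \<alpha> \<beta> e m k hhat (hhat_app k \<sigma> \<beta> e m Fk W)"
  shows
    "(\<forall>\<xi>\<in>Hc e m. \<forall>\<omega>\<in>space M.
        (\<lambda>n. if m \<le> n then
              (exp ((real k - 1) * z_sigma \<sigma> W \<omega>) *
               (\<Sum>i\<in>{..<k} \<rightarrow>\<^sub>E {..<m}.
                  (\<Prod>j<k. inner \<xi> (e (i j))) * inner (Fk (\<lambda>j. e (i j))) (e n)
                  * M_coef k \<sigma> \<beta> W n i \<omega>)) *\<^sub>R e n
             else 0)
        sums h_app k \<sigma> \<beta> e m Fk W \<xi> \<omega>)
     \<and> random_hom_poly M c \<alpha> \<beta> e m k (h_app k \<sigma> \<beta> e m Fk W)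
     \<and> leading_order_taylor M c \<alpha> \<beta> e m k (h_app k \<sigma> \<beta> e m Fk W) h
     \<and> (\<forall>\<xi>\<in>Hc e m. \<forall>\<omega>\<in>space M.
        (\<lambda>n. if m \<le> n then
              (\<Sum>i\<in>{..<k} \<rightarrow>\<^sub>E {..<m}.
                  (\<Prod>j<k. inner \<xi> (e (i j))) * inner (Fk (\<lambda>j. e (i j))) (e n)
                  * M_coef k \<sigma> \<beta> W n i \<omega>) *\<^sub>R e n
             else 0)
        sums hhat_app k \<sigma> \<beta> e m Fk W \<xi> \<omega>)
     \<and> random_hom_poly M c \<alpha> \<beta> e m k (hhat_app k \<sigma> \<beta> e m Fk W)
     \<and> leading_order_taylor M c \<alpha> \<beta> e m k (hhat_app k \<sigma> \<beta> e m Fk W) hhat"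
proof -
  have S: "setting e \<beta> m k \<alpha> c \<sigma> \<eta>c \<eta>s Fk M W"
    unfolding setting_def
    using basis beta_mono m_pos k_ge alpha c_shift sigma_pos Fk_cont Lambda_2k W_meas W_cont W_sublin_bot
    by auto
  show ?thesis by (rule setting.main[OF S h_approx hhat_approx])
qed


end
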